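(* Let $\mathcal{C}$ be a division Cayley algebra over a field $\mathbb{F}$. Then every local automorphism of $\mathcal{C}$ is a $2$-local automorphism, and hence the set of local automorphisms of $\mathcal{C}$ equals the set of $2$-local automorphisms of $\mathcal{C}$.
   Context: A Cayley (octonion) algebra over $\mathbb{F}$ is a unital nonassociative algebra $\mathcal{C}$ of dimension $8$ over $\mathbb{F}$ endowed with a quadratic form $\mathrm{n}:\mathcal{C}\to\mathbb{F}$ (the norm) such that $\mathrm{n}(xy)=\mathrm{n}(x)\mathrm{n}(y)$ for all $x,y$ and whose polar form $\mathrm{n}(x,y)=\mathrm{n}(x+y)-\mathrm{n}(x)-\mathrm{n}(y)$ is nondegenerate; it is a division Cayley algebra if it is a division algebra (equivalently $\mathrm{n}$ is anisotropic). A linear map $\psi:\mathcal{C}\to\mathcal{C}$ is a local automorphism if for every $x\in\mathcal{C}$ there is an automorphism $\varphi_x$ of $\mathcal{C}$ with $\psi(x)=\varphi_x(x)$. A map $\Delta:\mathcal{C}\to\mathcal{C}$ (not assumed linear) is a $2$-local automorphism if for every pair $x,y\in\mathcal{C}$ there is an automorphism $\varphi_{x,y}$ of $\mathcal{C}$ with $\Delta(x)=\varphi_{x,y}(x)$ and $\Delta(y)=\varphi_{x,y}(y)$. *)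

theory Defs
  imports Complex_Main
begin

definition bilinear_map :: "('f::field \<Rightarrow> 'v::ab_group_add \<Rightarrow> 'v) \<Rightarrow> ('f \<Rightarrow> 'w::ab_group_add \<Rightarrow> 'w)
    \<Rightarrow> ('v \<Rightarrow> 'v \<Rightarrow> 'w) \<Rightarrow> bool" where
  "bilinear_map scale scale' b \<longleftrightarrow>
     (\<forall>x. Vector_Spaces.linear scale scale' (b x)) \<and>
     (\<forall>y. Vector_Spaces.linear scale scale' (\<lambda>x. b x y))"

definition norm_polar :: "('v::ab_group_add \<Rightarrow> 'f::field) \<Rightarrow> 'v \<Rightarrow> 'v \<Rightarrow> 'f" where
  "norm_polar n x y = n (x + y) - n x - n y"

definition quadratic_form :: "('f::field \<Rightarrow> 'v::ab_group_add \<Rightarrow> 'v) \<Rightarrow> ('v \<Rightarrow> 'f) \<Rightarrow> bool" where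
  "quadratic_form scale n \<longleftrightarrow>
     (\<forall>a x. n (scale a x) = a * a * n x) \<and> bilinear_map scale (*) (norm_polar n)"

definition cayley_algebra ::
  "('f::field \<Rightarrow> 'v::ab_group_add \<Rightarrow> 'v) \<Rightarrow> ('v \<Rightarrow> 'v \<Rightarrow> 'v) \<Rightarrow> 'v \<Rightarrow> ('v \<Rightarrow> 'f) \<Rightarrow> bool" where
  "cayley_algebra scale mult one n \<longleftrightarrow>
     vector_space scale \<and>
     vector_space.dim scale UNIV = 8 \<and>
     bilinear_map scale scale mult \<and>
     (\<forall>x. mult one x = x \<and> mult x one = x) \<and>
     quadratic_form scale n \<and>
     (\<forall>x y. n (mult x y) = n x * n y) \<and>
     (\<forall>x. (\<forall>y. norm_polar n x y = 0) \<longrightarrow> x = 0)"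

definition division_algebra :: "('v::ab_group_add \<Rightarrow> 'v \<Rightarrow> 'v) \<Rightarrow> bool" where
  "division_algebra mult \<longleftrightarrow> (\<forall>a. a \<noteq> 0 \<longrightarrow> bij (mult a) \<and> bij (\<lambda>x. mult x a))"

definition division_cayley_algebra ::
  "('f::field \<Rightarrow> 'v::ab_group_add \<Rightarrow> 'v) \<Rightarrow> ('v \<Rightarrow> 'v \<Rightarrow> 'v) \<Rightarrow> 'v \<Rightarrow> ('v \<Rightarrow> 'f) \<Rightarrow> bool" where
  "division_cayley_algebra scale mult one n \<longleftrightarrow>
     cayley_algebra scale mult one n \<and> division_algebra mult"

definition algebra_automorphism ::
  "('f::field \<Rightarrow> 'v::ab_group_add \<Rightarrow> 'v) \<Rightarrow> ('v \<Rightarrow> 'v \<Rightarrow> 'v) \<Rightarrow> ('v \<Rightarrow> 'v) \<Rightarrow> bool" where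
  "algebra_automorphism scale mult \<phi> \<longleftrightarrow>
     Vector_Spaces.linear scale scale \<phi> \<and> bij \<phi> \<and> (\<forall>x y. \<phi> (mult x y) = mult (\<phi> x) (\<phi> y))"

definition local_automorphism ::
  "('f::field \<Rightarrow> 'v::ab_group_add \<Rightarrow> 'v) \<Rightarrow> ('v \<Rightarrow> 'v \<Rightarrow> 'v) \<Rightarrow> ('v \<Rightarrow> 'v) \<Rightarrow> bool" where
  "local_automorphism scale mult \<psi> \<longleftrightarrow>
     Vector_Spaces.linear scale scale \<psi> \<and>
     (\<forall>x. \<exists>\<phi>. algebra_automorphism scale mult \<phi> \<and> \<psi> x = \<phi> x)"

definition two_local_automorphism ::
  "('f::field \<Rightarrow> 'v::ab_group_add \<Rightarrow> 'v) \<Rightarrow> ('v \<Rightarrow> 'v \<Rightarrow> 'v) \<Rightarrow> ('v \<Rightarrow> 'v) \<Rightarrow> bool" where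
  "two_local_automorphism scale mult \<Delta> \<longleftrightarrow>
     (\<forall>x y. \<exists>\<phi>. algebra_automorphism scale mult \<phi> \<and> \<Delta> x = \<phi> x \<and> \<Delta> y = \<phi> y)"

end

theory Submission
  imports Defs
begin

locale cay = vector_space scale
  for scale :: "'f::field \<Rightarrow> 'v::ab_group_add \<Rightarrow> 'v" (infixr \<open>*s\<close> 75) +
  fixes mult :: "'v \<Rightarrow> 'v \<Rightarrow> 'v" (infixl \<open>\<odot>\<close> 70)
    and one :: 'v and n :: "'v \<Rightarrow> 'f"
  assumes dca: "division_cayley_algebra scale mult one n"
begin

definition P where "P x y = norm_polar n x y"
definition t where "t x = P x one"
definition cj where "cj x = t x *s one - x"

lemma dim8: "dim UNIV = 8" using dca by (simp add: division_cayley_algebra_def cayley_algebra_def)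

lemma lin_l: "Vector_Spaces.linear scale scale (\<lambda>x. x \<odot> y)"
  using dca by (simp add: division_cayley_algebra_def cayley_algebra_def bilinear_map_def)
lemma lin_r: "Vector_Spaces.linear scale scale (\<lambda>y. x \<odot> y)"
  using dca by (simp add: division_cayley_algebra_def cayley_algebra_def bilinear_map_def)

lemma ml_add: "(a + b) \<odot> c = a \<odot> c + b \<odot> c"
  using lin_l[of c] unfolding Vector_Spaces.linear_iff by blast
lemma mr_add: "c \<odot> (a + b) = c \<odot> a + c \<odot> b"
  using lin_r[of c] unfolding Vector_Spaces.linear_iff by blast
lemma ml_scale: "(k *s a) \<odot> c = k *s (a \<odot> c)"
  using lin_l[of c] unfolding Vector_Spaces.linear_iff by blast
lemma mr_scale: "c \<odot> (k *s a) = k *s (c \<odot> a)"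
  using lin_r[of c] unfolding Vector_Spaces.linear_iff by blast
lemma ml_zero: "0 \<odot> c = 0"
proof -
  have "(0 *s 0) \<odot> c = 0 *s (0 \<odot> c)" by (rule ml_scale)
  then show ?thesis by (simp only: scale_zero_left)
qed
lemma mr_zero: "c \<odot> 0 = 0"
proof -
  have "c \<odot> (0 *s 0) = 0 *s (c \<odot> 0)" by (rule mr_scale)
  then show ?thesis by (simp only: scale_zero_left)
qed
lemma ml_neg: "(- a) \<odot> c = - (a \<odot> c)" using ml_scale[of "-1" a c] by simp
lemma mr_neg: "c \<odot> (- a) = - (c \<odot> a)" using mr_scale[of c "-1" a] by simp
lemma ml_diff: "(a - b) \<odot> c = a \<odot> c - b \<odot> c" by (simp only: diff_conv_add_uminus ml_add ml_neg)
lemma mr_diff: "c \<odot> (a - b) = c \<odot> a - c \<odot> b" by (simp only: diff_conv_add_uminus mr_add mr_neg)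

lemma one_l[simp]: "one \<odot> x = x" using dca by (simp add: division_cayley_algebra_def cayley_algebra_def)
lemma one_r[simp]: "x \<odot> one = x" using dca by (simp add: division_cayley_algebra_def cayley_algebra_def)

lemmas bil = ml_add mr_add ml_scale mr_scale ml_zero mr_zero ml_neg mr_neg ml_diff mr_diff

lemma qf: "quadratic_form scale n" using dca by (simp add: division_cayley_algebra_def cayley_algebra_def)
lemma n_scale: "n (k *s x) = k * k * n x" using qf by (simp add: quadratic_form_def)
lemma n_mult: "n (x \<odot> y) = n x * n y" using dca by (simp add: division_cayley_algebra_def cayley_algebra_def)
lemma nondeg: "(\<And>y. P x y = 0) \<Longrightarrow> x = 0"
  using dca by (auto simp add: division_cayley_algebra_def cayley_algebra_def P_def)

interpretation fvs: vector_space "(*) :: 'f \<Rightarrow> 'f \<Rightarrow> 'f"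
  by unfold_locales (auto simp: algebra_simps)

lemma P_lin_l: "Vector_Spaces.linear scale (*) (\<lambda>x. P x y)"
  using qf by (simp add: quadratic_form_def bilinear_map_def P_def)
lemma P_lin_r: "Vector_Spaces.linear scale (*) (\<lambda>y. P x y)"
  using qf by (simp add: quadratic_form_def bilinear_map_def P_def)

lemma Pl_add: "P (a + b) c = P a c + P b c" using P_lin_l[of c] unfolding Vector_Spaces.linear_iff by blast
lemma Pr_add: "P c (a + b) = P c a + P c b" using P_lin_r[of c] unfolding Vector_Spaces.linear_iff by blast
lemma Pl_scale: "P (k *s a) c = k * P a c" using P_lin_l[of c] unfolding Vector_Spaces.linear_iff by blast
lemma Pr_scale: "P c (k *s a) = k * P c a" using P_lin_r[of c] unfolding Vector_Spaces.linear_iff by blast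
lemma Pl_zero: "P 0 c = 0"
proof -
  have "P (0 *s 0) c = 0 * P 0 c" by (rule Pl_scale)
  then show ?thesis by (simp only: scale_zero_left mult_zero_left)
qed
lemma Pr_zero: "P c 0 = 0"
proof -
  have "P c (0 *s 0) = 0 * P c 0" by (rule Pr_scale)
  then show ?thesis by (simp only: scale_zero_left mult_zero_left)
qed
lemma Pl_neg: "P (- a) c = - P a c" using Pl_scale[of "-1" a c] by simp
lemma Pr_neg: "P c (- a) = - P c a" using Pr_scale[of c "-1" a] by simp
lemma Pl_diff: "P (a - b) c = P a c - P b c" by (simp only: diff_conv_add_uminus Pl_add Pl_neg)
lemma Pr_diff: "P c (a - b) = P c a - P c b" by (simp only: diff_conv_add_uminus Pr_add Pr_neg)
lemma P_sym: "P a b = P b a" by (simp add: P_def norm_polar_def add.commute)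

lemmas Pbil = Pl_add Pr_add Pl_scale Pr_scale Pl_zero Pr_zero Pl_neg Pr_neg Pl_diff Pr_diff

lemma n_add: "n (a + b) = n a + n b + P a b" by (simp add: P_def norm_polar_def)
lemma n_zero[simp]: "n 0 = 0" using n_scale[of 0 0] by simp
lemma n_neg: "n (- a) = n a" using n_scale[of "-1" a] by simp
lemma n_diff: "n (a - b) = n a + n b - P a b"
  using n_add[of a "-b"] by (simp add: n_neg Pr_neg)
lemma P_self: "P a a = 2 * n a"
proof -
  have "a + a = 2 *s a" by (simp add: scale_left_distrib[of 1 1, simplified])
  then have "n (a + a) = 4 * n a" by (simp add: n_scale)
  then show ?thesis by (simp add: n_add)
qed

end


context cay
begin

lemma n_one: "n one = 1"
proof -
  have "n one = n one * n one" using n_mult[of one one] by simp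
  then have h: "n one = 0 \<or> n one = 1" by (metis mult_cancel_right2 mult_eq_0_iff)
  show ?thesis
  proof (rule ccontr)
    assume "n one \<noteq> 1"
    with h have z: "n one = 0" by simp
    have nz: "\<And>x. n x = 0" using n_mult[of one] z by (metis mult_zero_left one_l)
    have "\<And>x::'v. x = 0"
    proof -
      fix x :: 'v show "x = 0"
        by (rule nondeg) (simp add: P_def norm_polar_def nz)
    qed
    then have "span {} = span UNIV" by (auto simp: span_empty)
    then have "dim UNIV = card ({}::'v set)" using dim_eq_card[of "{}" UNIV] by (metis independent_empty)
    then show False using dim8 by simp
  qed
qed

lemma one_nz: "one \<noteq> 0" using n_one by auto
lemma P_one_one: "P one one = 2" using P_self[of one] n_one by simp
lemma t_one[simp]: "t one = 2" using P_one_one by (simp add: t_def)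

lemma I1: "P (x \<odot> y) (x \<odot> z) = n x * P y z"
proof -
  have "n (x \<odot> (y + z)) = n x * n (y + z)" by (rule n_mult)
  then show ?thesis by (simp add: mr_add n_add n_mult algebra_simps)
qed

lemma I1': "P (x \<odot> z) (y \<odot> z) = P x y * n z"
proof -
  have "n ((x + y) \<odot> z) = n (x + y) * n z" by (rule n_mult)
  then show ?thesis by (simp add: ml_add n_add n_mult algebra_simps)
qed

lemma I2: "P (x \<odot> y) (w \<odot> z) + P (w \<odot> y) (x \<odot> z) = P x w * P y z"
proof -
  have "P ((x + w) \<odot> y) ((x + w) \<odot> z) = n (x + w) * P y z" by (rule I1)
  then show ?thesis by (simp add: ml_add Pl_add Pr_add n_add I1 algebra_simps P_sym[of w x])
qed

lemma t_add: "t (a + b) = t a + t b" by (simp add: t_def Pl_add)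
lemma t_scale: "t (k *s a) = k * t a" by (simp add: t_def Pl_scale)
lemma t_neg: "t (- a) = - t a" by (simp add: t_def Pl_neg)
lemma t_diff: "t (a - b) = t a - t b" by (simp add: t_def Pl_diff)
lemma t_zero: "t 0 = 0" by (simp add: t_def Pl_zero)

lemma I4a: "P (x \<odot> y) z = P y (cj x \<odot> z)"
proof -
  have "P (x \<odot> y) (one \<odot> z) + P (one \<odot> y) (x \<odot> z) = P x one * P y z" by (rule I2)
  then show ?thesis by (simp add: cj_def bil Pbil t_def P_sym[of y] algebra_simps)
qed

lemma I4b: "P (x \<odot> y) z = P x (z \<odot> cj y)"
proof -
  have "P (x \<odot> y) (z \<odot> one) + P (z \<odot> y) (x \<odot> one) = P x z * P y one" by (rule I2)
  then show ?thesis by (simp add: cj_def bil Pbil t_def P_sym[of x] algebra_simps)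
qed

lemma t_cj: "t (cj x) = t x"
proof -
  have "t (cj x) = t (t x *s one) - t x" by (simp only: cj_def t_diff)
  then show ?thesis by (simp add: t_scale)
qed
lemma cj_cj[simp]: "cj (cj x) = x"
proof -
  have "cj (cj x) = t (cj x) *s one - cj x" by (rule cj_def)
  also have "\<dots> = t x *s one - cj x" by (simp only: t_cj)
  finally show ?thesis by (simp add: cj_def)
qed
lemma cj_add: "cj (a + b) = cj a + cj b" by (simp add: cj_def t_add algebra_simps)
lemma cj_scale: "cj (k *s a) = k *s cj a" by (simp add: cj_def t_scale algebra_simps)
lemma cj_one[simp]: "cj one = one"
proof -
  have "(2::'f) *s one = one + one" using scale_left_distrib[of 1 1 one] by simp
  then show ?thesis by (simp add: cj_def)
qed

lemma I5: "cj x \<odot> (x \<odot> y) = n x *s y"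
proof -
  have "cj x \<odot> (x \<odot> y) - n x *s y = 0"
  proof (rule nondeg)
    fix z show "P (cj x \<odot> (x \<odot> y) - n x *s y) z = 0"
    proof -
      have "P (cj x \<odot> (x \<odot> y)) z = P (x \<odot> y) (x \<odot> z)" using I4a[of "cj x" "x \<odot> y" z] by simp
      then show ?thesis by (simp add: Pl_diff I1 Pl_scale)
    qed
  qed
  then show ?thesis by simp
qed

lemma I5': "(y \<odot> x) \<odot> cj x = n x *s y"
proof -
  have "(y \<odot> x) \<odot> cj x - n x *s y = 0"
  proof (rule nondeg)
    fix z show "P ((y \<odot> x) \<odot> cj x - n x *s y) z = 0"
    proof -
      have "P ((y \<odot> x) \<odot> cj x) z = P (y \<odot> x) (z \<odot> x)" using I4b[of "y \<odot> x" "cj x" z] by simp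
      then show ?thesis by (simp add: Pl_diff I1' Pl_scale mult.commute)
    qed
  qed
  then show ?thesis by simp
qed

lemma quad: "x \<odot> x = t x *s x - n x *s one"
proof -
  have "cj x \<odot> (x \<odot> one) = n x *s one" by (rule I5)
  then show ?thesis by (simp add: cj_def bil algebra_simps)
qed

lemma aniso: assumes "n x = 0" shows "x = 0"
proof (cases "cj x = 0")
  case True
  then have "x = t x *s one" by (simp add: cj_def)
  then have "n x = t x * t x" using n_scale[of "t x" one] n_one by simp
  with assms have "t x = 0" by simp
  with \<open>x = t x *s one\<close> show ?thesis by simp
next
  case False
  then have "bij ((\<odot>) (cj x))" using dca by (simp add: division_cayley_algebra_def division_algebra_def)
  then have "inj ((\<odot>) (cj x))" by (rule bij_is_inj)
  moreover have "cj x \<odot> x = cj x \<odot> 0" using I5[of x one] assms by (simp add: mr_zero)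
  ultimately show ?thesis by (simp add: inj_eq)
qed

lemma n_eq0_iff: "n x = 0 \<longleftrightarrow> x = 0" using aniso by auto

lemma no_zd: "x \<odot> y = 0 \<Longrightarrow> x = 0 \<or> y = 0"
  using n_mult[of x y] by (simp add: n_eq0_iff)

lemma lin_quad: "x \<odot> y + y \<odot> x = t x *s y + t y *s x - P x y *s one"
proof -
  have "x \<odot> y + y \<odot> x = (x + y) \<odot> (x + y) - x \<odot> x - y \<odot> y" by (simp add: bil algebra_simps)
  also have "\<dots> = (t (x + y) *s (x + y) - n (x + y) *s one) - (t x *s x - n x *s one) - (t y *s y - n y *s one)"
    by (simp only: quad)
  also have "\<dots> = t x *s y + t y *s x - P x y *s one" by (simp add: t_add n_add algebra_simps)
  finally show ?thesis .
qed

lemma L: "cj x \<odot> (z \<odot> y) + cj z \<odot> (x \<odot> y) = P x z *s y"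
proof -
  have "cj (x + z) \<odot> ((x + z) \<odot> y) = n (x + z) *s y" by (rule I5)
  then show ?thesis by (simp add: bil cj_add I5 n_add algebra_simps)
qed

lemma R: "(y \<odot> x) \<odot> cj z + (y \<odot> z) \<odot> cj x = P x z *s y"
proof -
  have "(y \<odot> (x + z)) \<odot> cj (x + z) = n (x + z) *s y" by (rule I5')
  then show ?thesis by (simp add: bil cj_add I5' n_add algebra_simps)
qed

lemma t_mult: "t (x \<odot> y) = t x * t y - P x y"
proof -
  have "t (x \<odot> y) = P y (cj x \<odot> one)" by (simp add: t_def I4a)
  then show ?thesis by (simp add: cj_def Pbil t_def P_sym[of y])
qed

lemma cj_mult: "cj (x \<odot> y) = cj y \<odot> cj x"
proof -
  have "y \<odot> x = t x *s y + t y *s x - P x y *s one - x \<odot> y" using lin_quad[of x y] by (simp add: algebra_simps)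
  then show ?thesis by (simp add: cj_def t_mult bil algebra_simps)
qed

lemma P_cj: "P a (cj b) = t a * t b - P a b"
  by (simp add: cj_def Pbil t_def P_sym[of one])

lemma cj_diff: "cj (a - b) = cj a - cj b" by (simp add: cj_def t_diff algebra_simps)
lemma cj_zero[simp]: "cj 0 = 0" by (simp add: cj_def t_zero)

text \<open>Cayley-Dickson identities for w orthogonal to 1\<close>

lemma C2: assumes "t w = 0" "P w c = 0" shows "w \<odot> c = cj c \<odot> w"
proof -
  have "w \<odot> c + c \<odot> w = t c *s w" using lin_quad[of w c] assms by simp
  then show ?thesis by (simp add: cj_def bil algebra_simps)
qed

lemma cj_w: "t w = 0 \<Longrightarrow> cj w = - w" by (simp add: cj_def)

lemma C3: assumes tw: "t w = 0" and "P w a = 0" "P w b = 0" "P w (b \<odot> a) = 0"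
  shows "a \<odot> (b \<odot> w) = (b \<odot> a) \<odot> w"
proof -
  have "cj (cj a) \<odot> (w \<odot> cj b) + cj w \<odot> (cj a \<odot> cj b) = P (cj a) w *s cj b" by (rule L)
  moreover have "P (cj a) w = 0" using assms by (simp add: P_sym[of _ w] P_cj t_def)
  ultimately have e1: "a \<odot> (w \<odot> cj b) = w \<odot> cj (b \<odot> a)" using tw by (simp add: cj_w cj_mult bil)
  have "w \<odot> cj b = b \<odot> w" using C2[OF tw, of "cj b"] assms by (simp add: P_cj t_def)
  moreover have "w \<odot> cj (b \<odot> a) = (b \<odot> a) \<odot> w" using C2[OF tw, of "cj (b \<odot> a)"] assms by (simp add: P_cj t_def)
  ultimately show ?thesis using e1 by simp
qed

lemma C4: assumes tw: "t w = 0" and "P w b = 0"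
  shows "(a \<odot> w) \<odot> b = (a \<odot> cj b) \<odot> w"
proof -
  have "(a \<odot> cj b) \<odot> cj w + (a \<odot> w) \<odot> cj (cj b) = P (cj b) w *s a" by (rule R)
  moreover have "P (cj b) w = 0" using assms by (simp add: P_sym[of _ w] P_cj t_def)
  ultimately show ?thesis using tw by (simp add: cj_w bil algebra_simps)
qed

lemma C5: assumes tw: "t w = 0" and "P w a = 0" "P w b = 0" "P w (b \<odot> a) = 0"
  shows "(a \<odot> w) \<odot> (b \<odot> w) = - (n w *s (cj b \<odot> a))"
proof -
  have r: "(a \<odot> (b \<odot> w)) \<odot> cj w + (a \<odot> w) \<odot> cj (b \<odot> w) = P (b \<odot> w) w *s a" by (rule R)
  have tbw: "t (b \<odot> w) = 0" using assms by (simp add: t_def I4a P_sym[of _ w] P_cj)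
  have pbw: "P (b \<odot> w) w = t b * n w" using I1'[of b w one] by (simp add: t_def)
  have c3: "a \<odot> (b \<odot> w) = (b \<odot> a) \<odot> w" by (rule C3[OF assms])
  have i5: "((b \<odot> a) \<odot> w) \<odot> cj w = n w *s (b \<odot> a)" by (rule I5')
  have r0: "(a \<odot> (b \<odot> w)) \<odot> cj w + (a \<odot> w) \<odot> cj (b \<odot> w) - P (b \<odot> w) w *s a = 0" using r by simp
  have "(a \<odot> w) \<odot> (b \<odot> w) - (- ((a \<odot> (b \<odot> w)) \<odot> w) - (t b * n w) *s a) =
     - ((a \<odot> (b \<odot> w)) \<odot> cj w + (a \<odot> w) \<odot> cj (b \<odot> w) - P (b \<odot> w) w *s a)"
    using tw tbw pbw by (simp add: cj_w bil algebra_simps)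
  with r0 have "(a \<odot> w) \<odot> (b \<odot> w) = - ((a \<odot> (b \<odot> w)) \<odot> w) - (t b * n w) *s a" by simp
  also have "\<dots> = n w *s (b \<odot> a) - (t b * n w) *s a" using i5 c3 tw by (simp add: cj_w bil)
  finally show ?thesis by (simp add: cj_def bil algebra_simps)
qed

end


context cay
begin

definition Bas where "Bas = (SOME B. independent B \<and> span B = UNIV \<and> card B = 8)"

lemma Bas_props: "independent Bas \<and> span Bas = UNIV \<and> card Bas = 8"
proof -
  obtain B where "B \<subseteq> UNIV" "independent B" "UNIV \<subseteq> span B" "card B = dim UNIV"
    by (rule basis_exists)
  then have "independent B \<and> span B = UNIV \<and> card B = 8" using dim8 by auto
  then show ?thesis unfolding Bas_def by (rule someI)
qed

lemma fin_Bas: "finite Bas" using Bas_props by (metis card.infinite zero_neq_numeral)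

sublocale fd: finite_dimensional_vector_space scale Bas
  by unfold_locales (use Bas_props fin_Bas in auto)

lemma lin_zero_span:
  assumes "Vector_Spaces.linear scale (*) g" "\<And>b. b \<in> T \<Longrightarrow> g b = 0" "z \<in> span T"
  shows "g z = 0"
proof -
  have mh: "module_hom scale (*) g" using assms(1) by (simp add: module_hom_iff_linear)
  show ?thesis by (rule module_hom.eq_0_on_span[OF mh]) (use assms in auto)
qed

lemma lin_P: "Vector_Spaces.linear scale (*) (\<lambda>z. P u z)" by (rule P_lin_r)

lemma riesz:
  assumes lf: "Vector_Spaces.linear scale (*) f"
  shows "\<exists>u. \<forall>z. P u z = f z"
proof -
  define M where "M u = (\<Sum>b\<in>Bas. P u b *s b)" for u
  have linM: "Vector_Spaces.linear scale scale M"
    unfolding Vector_Spaces.linear_iff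
  proof (intro conjI allI)
    show "vector_space scale" by (rule vector_space_axioms)
    show "vector_space scale" by (rule vector_space_axioms)
    fix x y c
    show "M (x + y) = M x + M y" by (simp add: M_def Pl_add scale_left_distrib sum.distrib)
    show "M (c *s x) = c *s M x" by (simp add: M_def Pl_scale scale_sum_right)
  qed
  have mh: "module_hom scale scale M" using linM by (simp add: module_hom_iff_linear)
  have "inj M"
    unfolding module_hom.inj_iff_eq_0[OF mh]
  proof (intro allI impI)
    fix u assume "M u = 0"
    then have "\<And>b. b \<in> Bas \<Longrightarrow> P u b = 0"
      using independentD[OF conjunct1[OF Bas_props] fin_Bas order_refl, of "\<lambda>b. P u b"]
      by (simp add: M_def)
    then have "\<And>z. P u z = 0" using lin_zero_span[OF lin_P, of Bas u] Bas_props by auto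
    then show "u = 0" by (rule nondeg)
  qed
  then have "surj M" by (rule fd.linear_inj_imp_surj[OF linM])
  then obtain u where u: "M u = (\<Sum>b\<in>Bas. f b *s b)" by (metis surjD)
  have "(\<Sum>b\<in>Bas. (P u b - f b) *s b) = 0"
    using u by (simp add: M_def scale_left_diff_distrib sum_subtractf)
  then have "\<And>b. b \<in> Bas \<Longrightarrow> P u b - f b = 0"
    using independentD[OF conjunct1[OF Bas_props] fin_Bas order_refl, of "\<lambda>b. P u b - f b"] by simp
  moreover have lg: "Vector_Spaces.linear scale (*) (\<lambda>z. P u z - f z)"
    using lin_P[of u] lf by (simp add: Vector_Spaces.linear_iff algebra_simps)
  ultimately have "\<And>z. P u z - f z = 0"
  proof -
    fix z
    have "z \<in> span Bas" using Bas_props by blast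
    then show "P u z - f z = 0" using lin_zero_span[OF lg, of Bas z] \<open>\<And>b. b \<in> Bas \<Longrightarrow> P u b - f b = 0\<close> by blast
  qed
  then show ?thesis by (metis right_minus_eq)
qed

interpretation vp: vector_space_pair scale "(*) :: 'f \<Rightarrow> 'f \<Rightarrow> 'f"
  by unfold_locales (auto simp: algebra_simps)

lemma LA1:
  assumes "v \<notin> span S"
  shows "\<exists>u. P u v = 1 \<and> (\<forall>s\<in>S. P u s = 0)"
proof -
  obtain T where T: "T \<subseteq> S" "independent T" "S \<subseteq> span T" by (rule maximal_independent_subset)
  have vT: "v \<notin> span T" using assms T(1) span_mono by blast
  then have vT': "v \<notin> T" using span_base by blast
  have ind: "independent (insert v T)" by (rule independent_insertI[OF vT T(2)])
  define f where "f = vp.construct (insert v T) (\<lambda>b. if b = v then 1 else 0)"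
  have lf: "Vector_Spaces.linear scale (*) f" unfolding f_def by (rule vp.linear_construct[OF ind])
  have fv: "f v = 1" unfolding f_def by (subst vp.construct_basis[OF ind]) auto
  have fT: "\<And>b. b \<in> T \<Longrightarrow> f b = 0" unfolding f_def using vT'
    by (subst vp.construct_basis[OF ind]) auto
  have fS: "\<And>s. s \<in> S \<Longrightarrow> f s = 0" using lin_zero_span[OF lf fT] T(3) by blast
  obtain u where u: "\<forall>z. P u z = f z" using riesz[OF lf] by blast
  show ?thesis
  proof (intro exI[of _ u] conjI ballI)
    show "P u v = 1" using u fv by simp
    fix s assume "s \<in> S" then show "P u s = 0" using u fS by simp
  qed
qed

lemma LA2:
  assumes "finite S" "card S < 8"
  shows "\<exists>u. u \<noteq> 0 \<and> (\<forall>s\<in>S. P u s = 0)"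
proof -
  have "span S \<noteq> UNIV"
  proof
    assume "span S = UNIV"
    then have "dim (UNIV::'v set) \<le> card S" using dim_le_card[of UNIV S] assms(1) by auto
    then show False using dim8 assms(2) by simp
  qed
  then obtain v where "v \<notin> span S" by auto
  from LA1[OF this] obtain u where "P u v = 1" "\<forall>s\<in>S. P u s = 0" by blast
  moreover have "u \<noteq> 0" using \<open>P u v = 1\<close> by (auto simp: Pl_zero)
  ultimately show ?thesis by blast
qed

lemma span8:
  fixes f :: "nat \<Rightarrow> 'v"
  assumes indep: "\<And>c. (\<Sum>i<8. c i *s f i) = 0 \<Longrightarrow> \<forall>i<8. c i = 0"
  shows "z \<in> span (f ` {..<8})"
proof -
  have inj: "inj_on f {..<8}"
  proof (rule inj_onI)
    fix i j assume ij: "i \<in> {..<8}" "j \<in> {..<8}" "f i = f j"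
    show "i = j"
    proof (rule ccontr)
      assume "i \<noteq> j"
      define c where "c k = (if k = i then 1 else 0) - (if k = j then (1::'f) else 0)" for k
      have "\<And>k. c k *s f k = (if k = i then f k else 0) - (if k = j then f k else 0)"
        by (simp add: c_def scale_left_diff_distrib)
      then have "(\<Sum>k<8. c k *s f k) = f i - f j"
        using ij by (simp add: sum_subtractf)
      then have "(\<Sum>k<8. c k *s f k) = 0" using ij by simp
      then have "c i = 0" using indep ij by auto
      then show False using \<open>i \<noteq> j\<close> by (simp add: c_def)
    qed
  qed
  have ind: "independent (f ` {..<8})"
    unfolding fd.independent_explicit
  proof (intro conjI allI impI ballI)
    show "finite (f ` {..<8})" by simp
    fix c v assume s: "(\<Sum>v\<in>f ` {..<8}. c v *s v) = 0" and v: "v \<in> f ` {..<8}"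
    have "(\<Sum>i<8. c (f i) *s f i) = 0" using s by (simp add: sum.reindex[OF inj])
    then have "\<forall>i<8. c (f i) = 0" by (rule indep)
    then show "c v = 0" using v by auto
  qed
  have "card (f ` {..<8}) = 8" using card_image[OF inj] by simp
  then have "UNIV \<subseteq> span (f ` {..<8})"
    using fd.card_ge_dim_independent[of "f ` {..<8}" UNIV] ind dim8 by auto
  then show ?thesis by auto
qed

end


context cay
begin

definition aut where "aut \<phi> \<longleftrightarrow> algebra_automorphism scale mult \<phi>"

lemma aut_lin: assumes "aut \<phi>" shows "\<phi> (a + b) = \<phi> a + \<phi> b" "\<phi> (c *s a) = c *s \<phi> a"
  using assms unfolding aut_def algebra_automorphism_def Vector_Spaces.linear_iff by auto
lemma aut_mult: "aut \<phi> \<Longrightarrow> \<phi> (a \<odot> b) = \<phi> a \<odot> \<phi> b"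
  unfolding aut_def algebra_automorphism_def by auto
lemma aut_bij: "aut \<phi> \<Longrightarrow> bij \<phi>"
  unfolding aut_def algebra_automorphism_def by auto
lemma aut_zero: "aut \<phi> \<Longrightarrow> \<phi> 0 = 0"
  using aut_lin(2)[of \<phi> 0 0] by simp
lemma aut_diff: "aut \<phi> \<Longrightarrow> \<phi> (a - b) = \<phi> a - \<phi> b"
  using aut_lin(1)[of \<phi> "a - b" b] by (simp add: algebra_simps)

lemma aut_one: assumes "aut \<phi>" shows "\<phi> one = one"
proof -
  have "\<And>u. \<phi> one \<odot> u = u"
  proof -
    fix u
    obtain z where "u = \<phi> z" using aut_bij[OF assms] by (metis bij_pointE)
    then show "\<phi> one \<odot> u = u" using aut_mult[OF assms, of one z] by simp
  qed
  then have "\<phi> one \<odot> one = one" by blast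
  then show ?thesis by simp
qed

lemma aut_n: assumes a: "aut \<phi>" shows "n (\<phi> x) = n x"
proof -
  have "\<phi> (x \<odot> x) = \<phi> (t x *s x - n x *s one)" using quad by simp
  then have e1: "\<phi> x \<odot> \<phi> x = t x *s \<phi> x - n x *s one"
    using a by (simp add: aut_mult aut_diff aut_lin aut_one)
  have e2: "\<phi> x \<odot> \<phi> x = t (\<phi> x) *s \<phi> x - n (\<phi> x) *s one" by (rule quad)
  have e3: "(t (\<phi> x) - t x) *s \<phi> x = (n (\<phi> x) - n x) *s one"
  proof -
    have "(t (\<phi> x) - t x) *s \<phi> x - (n (\<phi> x) - n x) *s one =
      (t (\<phi> x) *s \<phi> x - n (\<phi> x) *s one) - (t x *s \<phi> x - n x *s one)"
      by (simp add: algebra_simps)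
    also have "\<dots> = 0" using e1 e2 by simp
    finally show ?thesis by simp
  qed
  show ?thesis
  proof (cases "t (\<phi> x) = t x")
    case True
    then have "(n (\<phi> x) - n x) *s one = 0" using e3 by simp
    then show ?thesis using one_nz by simp
  next
    case False
    define c where "c = (n (\<phi> x) - n x) / (t (\<phi> x) - t x)"
    have "\<phi> x = c *s one"
      using e3 False unfolding c_def by (metis divide_inverse_commute eq_iff_diff_eq_0 mult.commute scale_scale scale_one
          field_class.field_inverse)
    also have "\<dots> = \<phi> (c *s one)" using a by (simp add: aut_lin aut_one)
    finally have hx: "x = c *s one"
      using bij_is_inj[OF aut_bij[OF a]] by (simp add: inj_eq)
    have "\<phi> (c *s one) = c *s one" using a by (simp add: aut_lin aut_one)
    then show ?thesis using hx by simp
  qed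
qed

lemma aut_P: assumes "aut \<phi>" shows "P (\<phi> x) (\<phi> y) = P x y"
  using assms by (simp add: P_def norm_polar_def aut_n flip: aut_lin(1))

lemma aut_t: assumes "aut \<phi>" shows "t (\<phi> x) = t x"
  using aut_P[OF assms, of x one] aut_one[OF assms] by (simp add: t_def)

lemma aut_comp: assumes "aut f" "aut g" shows "aut (f \<circ> g)"
  using assms unfolding aut_def algebra_automorphism_def
  by (auto intro: Vector_Spaces.linear_compose bij_comp)

lemma aut_id: "aut id"
  unfolding aut_def algebra_automorphism_def
  by (simp add: Vector_Spaces.linear_iff vector_space_axioms)

lemma aut_intro:
  assumes add: "\<And>a b. \<phi> (a + b) = \<phi> a + \<phi> b" and sc: "\<And>c a. \<phi> (c *s a) = c *s \<phi> a"
    and mu: "\<And>a b. \<phi> (a \<odot> b) = \<phi> a \<odot> \<phi> b" and nn: "\<And>a. n (\<phi> a) = n a"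
  shows "aut \<phi>"
proof -
  have lin: "Vector_Spaces.linear scale scale \<phi>"
    unfolding Vector_Spaces.linear_iff using add sc vector_space_axioms by auto
  have mh: "module_hom scale scale \<phi>" using lin by (simp add: module_hom_iff_linear)
  have "inj \<phi>"
    unfolding module_hom.inj_iff_eq_0[OF mh]
    using nn by (metis n_eq0_iff n_zero)
  moreover then have "surj \<phi>" by (rule fd.linear_inj_imp_surj[OF lin])
  ultimately have "bij \<phi>" by (simp add: bij_def)
  then show ?thesis unfolding aut_def algebra_automorphism_def using lin mu by auto
qed

text \<open>subalgebras and doubling\<close>

definition subalg where "subalg A \<longleftrightarrow> one \<in> A \<and> (\<forall>a\<in>A. \<forall>b\<in>A. a + b \<in> A) \<and>
   (\<forall>a\<in>A. \<forall>c. c *s a \<in> A) \<and> (\<forall>a\<in>A. \<forall>b\<in>A. a \<odot> b \<in> A)"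
definition orth where "orth w A \<longleftrightarrow> (\<forall>a\<in>A. P w a = 0)"
definition dbl where "dbl A w = {a + b \<odot> w | a b. a \<in> A \<and> b \<in> A}"
definition iso_on where "iso_on \<sigma> A A' \<longleftrightarrow> (\<forall>a\<in>A. \<sigma> a \<in> A') \<and> (\<forall>a\<in>A. \<forall>b\<in>A. \<sigma> (a + b) = \<sigma> a + \<sigma> b) \<and>
   (\<forall>a\<in>A. \<forall>c. \<sigma> (c *s a) = c *s \<sigma> a) \<and> (\<forall>a\<in>A. \<forall>b\<in>A. \<sigma> (a \<odot> b) = \<sigma> a \<odot> \<sigma> b) \<and>
   (\<forall>a\<in>A. n (\<sigma> a) = n a) \<and> \<sigma> one = one"

lemma sa_one: "subalg A \<Longrightarrow> one \<in> A" by (simp add: subalg_def)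
lemma sa_add: "subalg A \<Longrightarrow> a \<in> A \<Longrightarrow> b \<in> A \<Longrightarrow> a + b \<in> A" by (simp add: subalg_def)
lemma sa_scale: "subalg A \<Longrightarrow> a \<in> A \<Longrightarrow> c *s a \<in> A" by (simp add: subalg_def)
lemma sa_mult: "subalg A \<Longrightarrow> a \<in> A \<Longrightarrow> b \<in> A \<Longrightarrow> a \<odot> b \<in> A" by (simp add: subalg_def)
lemma sa_zero: "subalg A \<Longrightarrow> 0 \<in> A" using sa_scale[of A one 0] sa_one by simp
lemma sa_neg: "subalg A \<Longrightarrow> a \<in> A \<Longrightarrow> - a \<in> A" using sa_scale[of A a "-1"] by simp
lemma sa_diff: "subalg A \<Longrightarrow> a \<in> A \<Longrightarrow> b \<in> A \<Longrightarrow> a - b \<in> A"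
  using sa_add[of A a "- b"] sa_neg by simp
lemma sa_cj: "subalg A \<Longrightarrow> a \<in> A \<Longrightarrow> cj a \<in> A"
  unfolding cj_def by (intro sa_diff sa_scale sa_one)

lemma iso_in: "iso_on \<sigma> A A' \<Longrightarrow> a \<in> A \<Longrightarrow> \<sigma> a \<in> A'" by (simp add: iso_on_def)
lemma iso_add: "iso_on \<sigma> A A' \<Longrightarrow> a \<in> A \<Longrightarrow> b \<in> A \<Longrightarrow> \<sigma> (a + b) = \<sigma> a + \<sigma> b" by (simp add: iso_on_def)
lemma iso_scale: "iso_on \<sigma> A A' \<Longrightarrow> a \<in> A \<Longrightarrow> \<sigma> (c *s a) = c *s \<sigma> a" by (simp add: iso_on_def)
lemma iso_mult: "iso_on \<sigma> A A' \<Longrightarrow> a \<in> A \<Longrightarrow> b \<in> A \<Longrightarrow> \<sigma> (a \<odot> b) = \<sigma> a \<odot> \<sigma> b" by (simp add: iso_on_def)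
lemma iso_n: "iso_on \<sigma> A A' \<Longrightarrow> a \<in> A \<Longrightarrow> n (\<sigma> a) = n a" by (simp add: iso_on_def)
lemma iso_one: "iso_on \<sigma> A A' \<Longrightarrow> \<sigma> one = one" by (simp add: iso_on_def)
lemma iso_zero: "iso_on \<sigma> A A' \<Longrightarrow> subalg A \<Longrightarrow> \<sigma> 0 = 0"
  using iso_scale[of \<sigma> A A' one 0] sa_one by simp
lemma iso_neg: "iso_on \<sigma> A A' \<Longrightarrow> a \<in> A \<Longrightarrow> \<sigma> (- a) = - \<sigma> a"
  using iso_scale[of \<sigma> A A' a "-1"] by simp
lemma iso_diff: "iso_on \<sigma> A A' \<Longrightarrow> subalg A \<Longrightarrow> a \<in> A \<Longrightarrow> b \<in> A \<Longrightarrow> \<sigma> (a - b) = \<sigma> a - \<sigma> b"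
  using iso_add[of \<sigma> A A' a "- b"] iso_neg[of \<sigma> A A' b] sa_neg by simp
lemma iso_t: assumes "iso_on \<sigma> A A'" "subalg A" "a \<in> A" shows "t (\<sigma> a) = t a"
proof -
  have "n (\<sigma> (a + one)) = n (a + one)" using assms by (simp add: iso_n sa_add sa_one)
  then show ?thesis using assms by (simp add: iso_add sa_one iso_one n_add iso_n t_def)
qed
lemma iso_cj: assumes "iso_on \<sigma> A A'" "subalg A" "a \<in> A" shows "\<sigma> (cj a) = cj (\<sigma> a)"
  using assms by (simp add: cj_def iso_diff sa_scale sa_one iso_scale iso_one iso_t)

lemma orthD: "orth w A \<Longrightarrow> a \<in> A \<Longrightarrow> P w a = 0" by (simp add: orth_def)
lemma orth_t: "orth w A \<Longrightarrow> subalg A \<Longrightarrow> t w = 0" by (simp add: orth_def t_def sa_one)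

lemma prod_formula:
  assumes A: "subalg A" and w: "orth w A" and abcd: "a \<in> A" "b \<in> A" "c \<in> A" "d \<in> A"
  shows "(a + b \<odot> w) \<odot> (c + d \<odot> w) = (a \<odot> c - n w *s (cj d \<odot> b)) + (d \<odot> a + b \<odot> cj c) \<odot> w"
proof -
  have tw: "t w = 0" by (rule orth_t[OF w A])
  have pw: "\<And>x. x \<in> A \<Longrightarrow> P w x = 0" using w by (simp add: orth_def)
  have c3: "a \<odot> (d \<odot> w) = (d \<odot> a) \<odot> w" by (rule C3[OF tw]) (use abcd A pw sa_mult in auto)
  have c4: "(b \<odot> w) \<odot> c = (b \<odot> cj c) \<odot> w" by (rule C4[OF tw]) (use abcd pw in auto)
  have c5: "(b \<odot> w) \<odot> (d \<odot> w) = - (n w *s (cj d \<odot> b))" by (rule C5[OF tw]) (use abcd A pw sa_mult in auto)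
  show ?thesis by (simp add: bil c3 c4 c5 algebra_simps)
qed

lemma dbl_subalg:
  assumes A: "subalg A" and w: "orth w A"
  shows "subalg (dbl A w)"
  unfolding subalg_def
proof (intro conjI ballI allI)
  show "one \<in> dbl A w" unfolding dbl_def using A
    by (intro CollectI exI[of _ one] exI[of _ 0]) (simp add: sa_one sa_zero ml_zero)
  fix x y assume x: "x \<in> dbl A w" and y: "y \<in> dbl A w"
  from x obtain a b where ab: "a \<in> A" "b \<in> A" "x = a + b \<odot> w" by (auto simp: dbl_def)
  from y obtain c d where cd: "c \<in> A" "d \<in> A" "y = c + d \<odot> w" by (auto simp: dbl_def)
  show "x + y \<in> dbl A w" unfolding dbl_def using ab cd A
    by (intro CollectI exI[of _ "a + c"] exI[of _ "b + d"]) (simp add: sa_add ml_add algebra_simps)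
  show "x \<odot> y \<in> dbl A w" unfolding dbl_def using ab cd A
    by (intro CollectI exI[of _ "a \<odot> c - n w *s (cj d \<odot> b)"] exI[of _ "d \<odot> a + b \<odot> cj c"])
      (simp add: prod_formula[OF A w] sa_add sa_diff sa_mult sa_scale sa_cj)
next
  fix x k assume x: "x \<in> dbl A w"
  from x obtain a b where ab: "a \<in> A" "b \<in> A" "x = a + b \<odot> w" by (auto simp: dbl_def)
  show "k *s x \<in> dbl A w" unfolding dbl_def using ab A
    by (intro CollectI exI[of _ "k *s a"] exI[of _ "k *s b"]) (simp add: sa_scale ml_scale algebra_simps)
qed

lemma in_dbl: "subalg A \<Longrightarrow> a \<in> A \<Longrightarrow> a \<in> dbl A w"
  unfolding dbl_def by (intro CollectI exI[of _ a] exI[of _ 0]) (simp add: sa_zero ml_zero)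

lemma w_in_dbl: "subalg A \<Longrightarrow> w \<in> dbl A w"
  unfolding dbl_def by (intro CollectI exI[of _ 0] exI[of _ one]) (simp add: sa_zero sa_one)

lemma dbl_uniq:
  assumes A: "subalg A" and wA: "w \<notin> A" and abcd: "a \<in> A" "b \<in> A" "c \<in> A" "d \<in> A"
    and eq: "a + b \<odot> w = c + d \<odot> w"
  shows "a = c \<and> b = d"
proof -
  define e where "e = b - d"
  define f where "f = a - c"
  have eA: "e \<in> A" and fA: "f \<in> A" using abcd A by (auto simp: e_def f_def sa_diff)
  have ef: "e \<odot> w = - f" using eq by (simp add: e_def f_def bil algebra_simps)
  have "e = 0"
  proof (rule ccontr)
    assume "e \<noteq> 0"
    then have ne: "n e \<noteq> 0" by (simp add: n_eq0_iff)
    have "n e *s w = cj e \<odot> (- f)" using I5[of e w] ef by simp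
    moreover have "w = (1 / n e) *s (n e *s w)" using ne by simp
    ultimately have "w = (1 / n e) *s (cj e \<odot> (- f))" by simp
    moreover have "(1 / n e) *s (cj e \<odot> (- f)) \<in> A" using A eA fA by (intro sa_scale sa_mult sa_cj sa_neg)
    ultimately show False using wA by simp
  qed
  then have "f = 0" using ef by (simp add: ml_zero)
  then show ?thesis using \<open>e = 0\<close> by (simp add: e_def f_def)
qed

lemma n_dbl:
  assumes A: "subalg A" and w: "orth w A" and ab: "a \<in> A" "b \<in> A"
  shows "n (a + b \<odot> w) = n a + n b * n w"
proof -
  have "P a (b \<odot> w) = P w (cj b \<odot> a)" by (simp add: P_sym[of a] I4a)
  also have "\<dots> = 0" using w A ab by (simp add: orth_def sa_mult sa_cj)
  finally show ?thesis by (simp add: n_add n_mult)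
qed

definition tau where "tau A \<sigma> w w' z = (let p = (SOME p. fst p \<in> A \<and> snd p \<in> A \<and> z = fst p + snd p \<odot> w)
   in \<sigma> (fst p) + \<sigma> (snd p) \<odot> w')"

lemma tau_eq:
  assumes A: "subalg A" and wA: "w \<notin> A" and ab: "a \<in> A" "b \<in> A"
  shows "tau A \<sigma> w w' (a + b \<odot> w) = \<sigma> a + \<sigma> b \<odot> w'"
proof -
  let ?Q = "\<lambda>p. fst p \<in> A \<and> snd p \<in> A \<and> a + b \<odot> w = fst p + snd p \<odot> w"
  have "?Q (a, b)" using ab by simp
  then have q: "?Q (SOME p. ?Q p)" by (rule someI)
  then have "a = fst (SOME p. ?Q p) \<and> b = snd (SOME p. ?Q p)"
    using dbl_uniq[OF A wA ab] by blast
  then show ?thesis unfolding tau_def Let_def by simp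
qed

lemma CD:
  assumes A: "subalg A" and A': "subalg A'" and sig: "iso_on \<sigma> A A'"
    and w: "orth w A" and wA: "w \<notin> A" and w': "orth w' A'" and nw: "n w' = n w"
  shows "iso_on (tau A \<sigma> w w') (dbl A w) (dbl A' w')" "tau A \<sigma> w w' w = w'"
    "\<And>a. a \<in> A \<Longrightarrow> tau A \<sigma> w w' a = \<sigma> a"
proof -
  let ?T = "tau A \<sigma> w w'"
  have T: "\<And>a b. a \<in> A \<Longrightarrow> b \<in> A \<Longrightarrow> ?T (a + b \<odot> w) = \<sigma> a + \<sigma> b \<odot> w'" by (rule tau_eq[OF A wA])
  have sA: "\<And>a. a \<in> A \<Longrightarrow> \<sigma> a \<in> A'" using sig by (simp add: iso_in)
  show "?T w = w'" using T[of 0 one] A sig by (simp add: sa_zero sa_one iso_zero iso_one)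
  show "\<And>a. a \<in> A \<Longrightarrow> ?T a = \<sigma> a" using T A sig by (metis add.right_neutral ml_zero iso_zero sa_zero)
  show "iso_on ?T (dbl A w) (dbl A' w')"
    unfolding iso_on_def
  proof (intro conjI ballI allI)
    show "?T one = one" using T[of one 0] A sig by (simp add: sa_zero sa_one iso_zero iso_one ml_zero)
    fix x y assume x: "x \<in> dbl A w" and y: "y \<in> dbl A w"
    from x obtain a b where ab: "a \<in> A" "b \<in> A" "x = a + b \<odot> w" by (auto simp: dbl_def)
    from y obtain c d where cd: "c \<in> A" "d \<in> A" "y = c + d \<odot> w" by (auto simp: dbl_def)
    show "?T x \<in> dbl A' w'" using ab T sA unfolding dbl_def by blast
    have "x + y = (a + c) + (b + d) \<odot> w" using ab cd by (simp add: ml_add algebra_simps)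
    then have "?T (x + y) = ?T ((a + c) + (b + d) \<odot> w)" by (rule arg_cong)
    also have "\<dots> = \<sigma> (a + c) + \<sigma> (b + d) \<odot> w'" by (rule T) (use ab cd A sa_add in auto)
    finally have "?T (x + y) = \<sigma> (a + c) + \<sigma> (b + d) \<odot> w'" .
    then show "?T (x + y) = ?T x + ?T y" using ab cd T A sig
      by (simp add: sa_add iso_add ml_add algebra_simps)
    have "x \<odot> y = (a \<odot> c - n w *s (cj d \<odot> b)) + (d \<odot> a + b \<odot> cj c) \<odot> w"
      using ab cd by (simp add: prod_formula[OF A w])
    then have "?T (x \<odot> y) = \<sigma> (a \<odot> c - n w *s (cj d \<odot> b)) + \<sigma> (d \<odot> a + b \<odot> cj c) \<odot> w'"
      using T ab cd A by (simp add: sa_add sa_diff sa_mult sa_scale sa_cj)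
    also have "\<dots> = (\<sigma> a \<odot> \<sigma> c - n w' *s (cj (\<sigma> d) \<odot> \<sigma> b)) + (\<sigma> d \<odot> \<sigma> a + \<sigma> b \<odot> cj (\<sigma> c)) \<odot> w'"
      using ab cd A sig nw
      by (simp add: sa_add sa_diff sa_mult sa_scale sa_cj iso_add iso_diff iso_mult iso_scale iso_cj)
    also have "\<dots> = (\<sigma> a + \<sigma> b \<odot> w') \<odot> (\<sigma> c + \<sigma> d \<odot> w')"
      using ab cd sA by (simp add: prod_formula[OF A' w'])
    finally show "?T (x \<odot> y) = ?T x \<odot> ?T y" using ab cd T by simp
    show "n (?T x) = n x" using ab T sA sig nw by (simp add: n_dbl[OF A' w'] n_dbl[OF A w] iso_n)
  next
    fix x k assume x: "x \<in> dbl A w"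
    from x obtain a b where ab: "a \<in> A" "b \<in> A" "x = a + b \<odot> w" by (auto simp: dbl_def)
    have "k *s x = (k *s a) + (k *s b) \<odot> w" using ab by (simp add: ml_scale algebra_simps)
    then have "?T (k *s x) = ?T ((k *s a) + (k *s b) \<odot> w)" by (rule arg_cong)
    also have "\<dots> = \<sigma> (k *s a) + \<sigma> (k *s b) \<odot> w'" by (rule T) (use ab A sa_scale in auto)
    finally have "?T (k *s x) = \<sigma> (k *s a) + \<sigma> (k *s b) \<odot> w'" .
    then show "?T (k *s x) = k *s ?T x" using ab T A sig
      by (simp add: sa_scale iso_scale ml_scale algebra_simps)
  qed
qed

end


context cay
begin

definition det where "det e = 4 * n e - t e * t e"
definition Ksp where "Ksp e = {\<alpha> *s one + \<beta> *s e | \<alpha> \<beta>. True}"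

lemma P_one_e: "P one e = t e" by (simp add: t_def P_sym)

lemma nK: "n (\<alpha> *s one + \<beta> *s e) = \<alpha> * \<alpha> + \<alpha> * \<beta> * t e + \<beta> * \<beta> * n e"
  by (simp add: n_add n_scale n_one Pbil P_one_e algebra_simps)

lemma det_notF1: assumes "det e \<noteq> 0" shows "e \<noteq> c *s one"
proof
  assume "e = c *s one"
  then have "det e = 0" by (simp add: det_def n_scale n_one t_scale algebra_simps)
  with assms show False by simp
qed

lemma K_uniq:
  assumes d: "det e \<noteq> 0" and eq: "\<alpha> *s one + \<beta> *s e = \<alpha>' *s one + \<beta>' *s e"
  shows "\<alpha> = \<alpha>' \<and> \<beta> = \<beta>'"
proof -
  have b: "\<beta> = \<beta>'"
  proof (rule ccontr)
    assume ne: "\<beta> \<noteq> \<beta>'"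
    have "(\<beta> - \<beta>') *s e = (\<alpha>' - \<alpha>) *s one" using eq by (simp add: algebra_simps)
    then have "e = ((\<alpha>' - \<alpha>) / (\<beta> - \<beta>')) *s one" using ne
      by (metis (no_types, lifting) divide_inverse_commute eq_iff_diff_eq_0 field_class.field_inverse mult.commute scale_one scale_scale)
    with det_notF1[OF d] show False by blast
  qed
  then have "\<alpha> *s one = \<alpha>' *s one" using eq by simp
  then show ?thesis using b one_nz by simp
qed

lemma K_subalg: "subalg (Ksp e)"
  unfolding subalg_def Ksp_def
proof (intro conjI ballI allI)
  show "one \<in> {\<alpha> *s one + \<beta> *s e |\<alpha> \<beta>. True}" by (intro CollectI exI[of _ 1] exI[of _ 0]) simp
next
  fix x y assume "x \<in> {\<alpha> *s one + \<beta> *s e |\<alpha> \<beta>. True}" "y \<in> {\<alpha> *s one + \<beta> *s e |\<alpha> \<beta>. True}"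
  then obtain a b c d where x: "x = a *s one + b *s e" and y: "y = c *s one + d *s e" by blast
  show "x + y \<in> {\<alpha> *s one + \<beta> *s e |\<alpha> \<beta>. True}"
    by (intro CollectI exI[of _ "a + c"] exI[of _ "b + d"]) (simp add: x y algebra_simps)
  have "x \<odot> y = (a * c - b * d * n e) *s one + (a * d + b * c + b * d * t e) *s e"
    by (simp add: x y bil quad algebra_simps)
  then show "x \<odot> y \<in> {\<alpha> *s one + \<beta> *s e |\<alpha> \<beta>. True}" by blast
next
  fix x k assume "x \<in> {\<alpha> *s one + \<beta> *s e |\<alpha> \<beta>. True}"
  then obtain a b where x: "x = a *s one + b *s e" by blast
  show "k *s x \<in> {\<alpha> *s one + \<beta> *s e |\<alpha> \<beta>. True}"
    by (intro CollectI exI[of _ "k * a"] exI[of _ "k * b"]) (simp add: x algebra_simps)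
qed

lemma in_K1: "one \<in> Ksp e" using K_subalg sa_one by blast
lemma in_Ke: "e \<in> Ksp e" unfolding Ksp_def by (intro CollectI exI[of _ 0] exI[of _ 1]) simp

lemma K_nd:
  assumes d: "det e \<noteq> 0" and k: "k \<in> Ksp e" and p1: "P k one = 0" and p2: "P k e = 0"
  shows "k = 0"
proof -
  obtain a b where kk: "k = a *s one + b *s e" using k by (auto simp: Ksp_def)
  have h1: "2 * a + b * t e = 0" using p1 by (simp add: kk Pbil P_one_one t_def algebra_simps)
  have h2: "a * t e + b * (2 * n e) = 0" using p2 by (simp add: kk Pbil P_one_e P_self)
  have "b * det e = 2 * (a * t e + b * (2 * n e)) - t e * (2 * a + b * t e)" by (simp add: det_def algebra_simps)
  then have "b = 0" using h1 h2 d by simp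
  moreover have "a * det e = 2 * n e * (2 * a + b * t e) - t e * (a * t e + b * (2 * n e))" by (simp add: det_def algebra_simps)
  then have "a = 0" using h1 h2 d by simp
  ultimately show ?thesis by (simp add: kk)
qed

lemma orth_K: "P w one = 0 \<Longrightarrow> P w e = 0 \<Longrightarrow> orth w (Ksp e)"
  unfolding orth_def Ksp_def by (auto simp: Pbil)

lemma notin_K: "det e \<noteq> 0 \<Longrightarrow> w \<noteq> 0 \<Longrightarrow> orth w (Ksp e) \<Longrightarrow> w \<notin> Ksp e"
  using K_nd[of e w] in_K1 in_Ke by (auto simp: orth_def)

definition sig0 where "sig0 e e' z = (SOME z'. \<exists>\<alpha> \<beta>. z = \<alpha> *s one + \<beta> *s e \<and> z' = \<alpha> *s one + \<beta> *s e')"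

lemma sig0_eq: assumes "det e \<noteq> 0" shows "sig0 e e' (\<alpha> *s one + \<beta> *s e) = \<alpha> *s one + \<beta> *s e'"
proof -
  let ?Q = "\<lambda>z'. \<exists>a b. \<alpha> *s one + \<beta> *s e = a *s one + b *s e \<and> z' = a *s one + b *s e'"
  have "?Q (\<alpha> *s one + \<beta> *s e')" by blast
  then have "?Q (SOME z'. ?Q z')" by (rule someI)
  then obtain a b where "\<alpha> *s one + \<beta> *s e = a *s one + b *s e" "(SOME z'. ?Q z') = a *s one + b *s e'" by blast
  then show ?thesis using K_uniq[OF assms] unfolding sig0_def by metis
qed

lemma sig0_iso:
  assumes d: "det e \<noteq> 0" and tt: "t e' = t e" and nn: "n e' = n e"
  shows "iso_on (sig0 e e') (Ksp e) (Ksp e')"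
  unfolding iso_on_def
proof (intro conjI ballI allI)
  have S: "\<And>a b. sig0 e e' (a *s one + b *s e) = a *s one + b *s e'" by (rule sig0_eq[OF d])
  show "sig0 e e' one = one" using S[of 1 0] by simp
  fix x y assume "x \<in> Ksp e" "y \<in> Ksp e"
  then obtain a b c dd where x: "x = a *s one + b *s e" and y: "y = c *s one + dd *s e" by (auto simp: Ksp_def)
  show "sig0 e e' x \<in> Ksp e'" using S by (auto simp: x Ksp_def)
  have "x + y = (a + c) *s one + (b + dd) *s e" by (simp add: x y algebra_simps)
  then have 1: "sig0 e e' (x + y) = (a + c) *s one + (b + dd) *s e'" by (simp only: S)
  show "sig0 e e' (x + y) = sig0 e e' x + sig0 e e' y" unfolding 1 by (simp add: S x y algebra_simps)
  have "x \<odot> y = (a * c - b * dd * n e) *s one + (a * dd + b * c + b * dd * t e) *s e"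
    by (simp add: x y bil quad algebra_simps)
  moreover have "sig0 e e' x \<odot> sig0 e e' y = (a * c - b * dd * n e) *s one + (a * dd + b * c + b * dd * t e) *s e'"
    by (simp add: x y S bil quad tt nn algebra_simps)
  ultimately show "sig0 e e' (x \<odot> y) = sig0 e e' x \<odot> sig0 e e' y" by (simp only: S)
  show "n (sig0 e e' x) = n x" by (simp add: x S nK tt nn)
next
  fix x k assume "x \<in> Ksp e"
  then obtain a b where x: "x = a *s one + b *s e" by (auto simp: Ksp_def)
  have "k *s x = (k * a) *s one + (k * b) *s e" by (simp add: x algebra_simps)
  then have 1: "sig0 e e' (k *s x) = (k * a) *s one + (k * b) *s e'" by (simp only: sig0_eq[OF d])
  show "sig0 e e' (k *s x) = k *s sig0 e e' x" unfolding 1 by (simp add: x sig0_eq[OF d] algebra_simps)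
qed

lemma sub_subspace: "subalg A \<Longrightarrow> subspace A"
  unfolding subspace_def by (auto simp: sa_zero sa_add sa_scale)

lemma chain:
  assumes d: "det e \<noteq> 0" and tt: "t e' = t e" and nn: "n e' = n e"
    and a1: "P w1 one = 0" "P w1 e = 0" "w1 \<noteq> 0"
    and a1': "P w1' one = 0" "P w1' e' = 0" "n w1' = n w1"
    and a2: "P w2 one = 0" "P w2 e = 0" "P w2 w1 = 0" "P w2 (e \<odot> w1) = 0" "w2 \<noteq> 0"
    and a2': "P w2' one = 0" "P w2' e' = 0" "P w2' w1' = 0" "P w2' (e' \<odot> w1') = 0" "n w2' = n w2"
  shows "\<exists>\<phi>. aut \<phi> \<and> \<phi> e = e' \<and> \<phi> w1 = w1' \<and> \<phi> w2 = w2'"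
proof -
  let ?K = "Ksp e" and ?K' = "Ksp e'"
  have d': "det e' \<noteq> 0" using d tt nn by (simp add: det_def)
  have K: "subalg ?K" and K': "subalg ?K'" by (rule K_subalg)+
  have s0: "iso_on (sig0 e e') ?K ?K'" by (rule sig0_iso[OF d tt nn])
  have o1: "orth w1 ?K" by (rule orth_K[OF a1(1,2)])
  have o1': "orth w1' ?K'" by (rule orth_K[OF a1'(1,2)])
  have n1: "w1 \<notin> ?K" by (rule notin_K[OF d a1(3) o1])
  define t1 where "t1 = tau ?K (sig0 e e') w1 w1'"
  have T1: "iso_on t1 (dbl ?K w1) (dbl ?K' w1')" "t1 w1 = w1'" "\<And>a. a \<in> ?K \<Longrightarrow> t1 a = sig0 e e' a"
    unfolding t1_def by (rule CD[OF K K' s0 o1 n1 o1' a1'(3)])+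
  let ?Q = "dbl ?K w1" and ?Q' = "dbl ?K' w1'"
  have Q: "subalg ?Q" by (rule dbl_subalg[OF K o1])
  have Q': "subalg ?Q'" by (rule dbl_subalg[OF K' o1'])
  have oQ: "\<And>w w1 e. P w one = 0 \<Longrightarrow> P w e = 0 \<Longrightarrow> P w w1 = 0 \<Longrightarrow> P w (e \<odot> w1) = 0 \<Longrightarrow> orth w (dbl (Ksp e) w1)"
    unfolding orth_def dbl_def Ksp_def by (auto simp: Pbil bil)
  have o2: "orth w2 ?Q" by (rule oQ[OF a2(1-4)])
  have o2': "orth w2' ?Q'" by (rule oQ[OF a2'(1-4)])
  have nw1: "n w1 \<noteq> 0" using a1(3) by (simp add: n_eq0_iff)
  have n2: "w2 \<notin> ?Q"
  proof
    assume "w2 \<in> ?Q"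
    then obtain a b where ab: "a \<in> ?K" "b \<in> ?K" "w2 = a + b \<odot> w1" by (auto simp: dbl_def)
    have pa: "\<And>k. k \<in> ?K \<Longrightarrow> P a k = 0"
    proof -
      fix k assume k: "k \<in> ?K"
      have "P (b \<odot> w1) k = P w1 (cj b \<odot> k)" by (rule I4a)
      also have "\<dots> = 0" using o1 K ab k by (simp add: orthD sa_mult sa_cj)
      finally have "P (b \<odot> w1) k = 0" .
      moreover have "P w2 k = 0" using o2 K k by (simp add: orthD in_dbl)
      ultimately show "P a k = 0" using ab by (simp add: Pl_add)
    qed
    have "a = 0" using K_nd[OF d ab(1)] pa in_K1 in_Ke by blast
    have pb: "\<And>k. k \<in> ?K \<Longrightarrow> P b k = 0"
    proof -
      fix k assume k: "k \<in> ?K"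
      have "k \<odot> w1 \<in> ?Q" using K k unfolding dbl_def by (intro CollectI exI[of _ 0] exI[of _ k]) (simp add: sa_zero)
      then have "P w2 (k \<odot> w1) = 0" using o2 by (simp add: orthD)
      then have "P b k * n w1 = 0" using ab \<open>a = 0\<close> by (simp add: I1')
      then show "P b k = 0" using nw1 by simp
    qed
    have "b = 0" using K_nd[OF d ab(2)] pb in_K1 in_Ke by blast
    then show False using a2(5) ab \<open>a = 0\<close> by (simp add: ml_zero)
  qed
  have nw: "n w2' = n w2" by (rule a2'(5))
  define t2 where "t2 = tau ?Q t1 w2 w2'"
  have T2: "iso_on t2 (dbl ?Q w2) (dbl ?Q' w2')" "t2 w2 = w2'" "\<And>a. a \<in> ?Q \<Longrightarrow> t2 a = t1 a"
    unfolding t2_def by (rule CD[OF Q Q' T1(1) o2 n2 o2' nw])+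
  let ?R = "dbl ?Q w2"
  have R: "subalg ?R" by (rule dbl_subalg[OF Q o2])
  define f where "f i = [one, e, w1, e \<odot> w1, w2, e \<odot> w2, w1 \<odot> w2, (e \<odot> w1) \<odot> w2] ! i" for i
  have fR: "f ` {..<8} \<subseteq> ?R"
  proof -
    have eQ: "e \<in> ?Q" and oneQ: "one \<in> ?Q" using K by (simp_all add: in_dbl in_Ke in_K1)
    have w1Q: "w1 \<in> ?Q" by (rule w_in_dbl[OF K])
    have w2R: "w2 \<in> ?R" by (rule w_in_dbl[OF Q])
    have "\<And>x. x \<in> ?Q \<Longrightarrow> x \<in> ?R" using Q by (simp add: in_dbl)
    then have "one \<in> ?R" "e \<in> ?R" "w1 \<in> ?R" "e \<odot> w1 \<in> ?R" using eQ oneQ w1Q Q by (simp_all add: sa_mult)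
    then show ?thesis using w2R R
      by (auto simp: f_def lessThan_def eval_nat_numeral less_Suc_eq sa_mult)
  qed
  have allR: "\<And>z. z \<in> ?R"
  proof -
    fix z
    have "z \<in> span (f ` {..<8})"
    proof (rule span8)
      fix c :: "nat \<Rightarrow> 'f"
      assume s: "(\<Sum>i<8. c i *s f i) = 0"
      define k0 where "k0 = c 0 *s one + c 1 *s e"
      define k1 where "k1 = c 2 *s one + c 3 *s e"
      define k2 where "k2 = c 4 *s one + c 5 *s e"
      define k3 where "k3 = c 6 *s one + c 7 *s e"
      have kK: "k0 \<in> ?K" "k1 \<in> ?K" "k2 \<in> ?K" "k3 \<in> ?K"
        unfolding k0_def k1_def k2_def k3_def Ksp_def by blast+
      have "(\<Sum>i<8. c i *s f i) = (k0 + k1 \<odot> w1) + (k2 + k3 \<odot> w1) \<odot> w2"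
        by (simp add: f_def eval_nat_numeral k0_def k1_def k2_def k3_def bil algebra_simps)
      then have e0: "(k0 + k1 \<odot> w1) + (k2 + k3 \<odot> w1) \<odot> w2 = 0 + 0 \<odot> w2" using s by (simp add: ml_zero)
      have qQ: "k0 + k1 \<odot> w1 \<in> ?Q" "k2 + k3 \<odot> w1 \<in> ?Q" using kK unfolding dbl_def by blast+
      have z1: "k0 + k1 \<odot> w1 = 0" "k2 + k3 \<odot> w1 = 0"
        using dbl_uniq[OF Q n2 qQ sa_zero[OF Q] sa_zero[OF Q] e0] by auto
      have zk: "k0 = 0 \<and> k1 = 0" "k2 = 0 \<and> k3 = 0"
        using dbl_uniq[OF K n1 kK(1,2) sa_zero[OF K] sa_zero[OF K]] dbl_uniq[OF K n1 kK(3,4) sa_zero[OF K] sa_zero[OF K]]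
          z1 by (auto simp: ml_zero)
      have "\<And>a b. a *s one + b *s e = 0 \<Longrightarrow> a = 0 \<and> b = 0"
        using K_uniq[OF d, of _ _ 0 0] by simp
      then have "c 0 = 0 \<and> c 1 = 0" "c 2 = 0 \<and> c 3 = 0" "c 4 = 0 \<and> c 5 = 0" "c 6 = 0 \<and> c 7 = 0"
        using zk by (auto simp: k0_def k1_def k2_def k3_def)
      then show "\<forall>i<8. c i = 0" by (auto simp: eval_nat_numeral less_Suc_eq)
    qed
    then show "z \<in> ?R" using span_minimal[OF fR sub_subspace[OF R]] by blast
  qed
  have isoR: "iso_on t2 ?R (dbl ?Q' w2')" by (rule T2(1))
  have "aut t2"
  proof (rule aut_intro)
    fix a b c
    show "t2 (a + b) = t2 a + t2 b" using iso_add[OF isoR] allR by blast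
    show "t2 (c *s a) = c *s t2 a" using iso_scale[OF isoR] allR by blast
    show "t2 (a \<odot> b) = t2 a \<odot> t2 b" using iso_mult[OF isoR] allR by blast
    show "n (t2 a) = n a" using iso_n[OF isoR] allR by blast
  qed
  moreover have "t2 e = e'"
  proof -
    have "t2 e = t1 e" using T2(3) K by (simp add: in_dbl in_Ke)
    also have "\<dots> = sig0 e e' e" using T1(3) in_Ke by blast
    also have "\<dots> = e'" using sig0_eq[OF d, of e' 0 1] by simp
    finally show ?thesis .
  qed
  moreover have "t2 w1 = w1'" using T2(3) T1(2) w_in_dbl[OF K] by simp
  ultimately show ?thesis using T2(2) by blast
qed

end


context cay
begin

lemma cramer:
  assumes d: "det e \<noteq> 0"
  shows "\<exists>\<alpha> \<beta>. P (\<alpha> *s one + \<beta> *s e) one = a0 \<and> P (\<alpha> *s one + \<beta> *s e) e = a1"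
proof -
  define D where "D = det e"
  define \<alpha> where "\<alpha> = (2 * n e * a0 - t e * a1) / D"
  define \<beta> where "\<beta> = (2 * a1 - t e * a0) / D"
  have D: "D = 4 * n e - t e * t e" "D \<noteq> 0" using d by (simp_all add: D_def det_def)
  have e1: "P (\<alpha> *s one + \<beta> *s e) one = 2 * \<alpha> + \<beta> * t e" by (simp add: Pbil P_one_one t_def algebra_simps)
  have e2: "P (\<alpha> *s one + \<beta> *s e) e = \<alpha> * t e + \<beta> * (2 * n e)" by (simp add: Pbil P_one_e P_self)
  have aD: "\<alpha> * D = 2 * n e * a0 - t e * a1" using D(2) by (simp add: \<alpha>_def)
  have bD: "\<beta> * D = 2 * a1 - t e * a0" using D(2) by (simp add: \<beta>_def)
  have "(2 * \<alpha> + \<beta> * t e) * D = 2 * (\<alpha> * D) + t e * (\<beta> * D)" by (simp add: algebra_simps)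
  also have "\<dots> = a0 * (4 * n e - t e * t e)" by (unfold aD bD) (simp add: algebra_simps)
  also have "\<dots> = a0 * D" using D(1) by simp
  finally have r1: "2 * \<alpha> + \<beta> * t e = a0" using D(2) by simp
  have "(\<alpha> * t e + \<beta> * (2 * n e)) * D = t e * (\<alpha> * D) + 2 * n e * (\<beta> * D)" by (simp add: algebra_simps)
  moreover have "t e * (\<alpha> * D) + 2 * n e * (\<beta> * D) = a1 * (4 * n e - t e * t e)" by (unfold aD bD) (simp add: algebra_simps)
  ultimately have r2: "\<alpha> * t e + \<beta> * (2 * n e) = a1" using D by simp
  show ?thesis using e1 e2 r1 r2 by blast
qed

lemma proj2:
  assumes d: "det e \<noteq> 0" and h1: "P z1 one = P z2 one" and h2: "P z1 e = P z2 e"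
  shows "\<exists>\<alpha> \<beta>. P (z1 - (\<alpha> *s one + \<beta> *s e)) one = 0 \<and> P (z1 - (\<alpha> *s one + \<beta> *s e)) e = 0 \<and>
                P (z2 - (\<alpha> *s one + \<beta> *s e)) one = 0 \<and> P (z2 - (\<alpha> *s one + \<beta> *s e)) e = 0"
proof -
  obtain \<alpha> \<beta> where "P (\<alpha> *s one + \<beta> *s e) one = P z1 one" "P (\<alpha> *s one + \<beta> *s e) e = P z1 e"
    using cramer[OF d] by blast
  then show ?thesis using h1 h2 by (intro exI[of _ \<alpha>] exI[of _ \<beta>]) (simp add: Pl_diff)
qed

lemma card6: "card (set [a, b, c, d, e, f :: 'v]) < 8"
  by (rule le_less_trans[OF card_length]) simp

lemma aut_fix_K: "aut \<phi> \<Longrightarrow> \<phi> X = X \<Longrightarrow> \<phi> (\<alpha> *s one + \<beta> *s X) = \<alpha> *s one + \<beta> *s X"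
  by (simp add: aut_lin aut_one)

lemma coreA:
  assumes d: "det X \<noteq> 0" and tt: "t Y1 = t Y2" and pp: "P X Y1 = P X Y2" and nn: "n Y1 = n Y2"
  shows "\<exists>\<phi>. aut \<phi> \<and> \<phi> X = X \<and> \<phi> Y1 = Y2"
proof -
  obtain \<alpha> \<beta> where pr: "P (Y1 - (\<alpha> *s one + \<beta> *s X)) one = 0" "P (Y1 - (\<alpha> *s one + \<beta> *s X)) X = 0"
      "P (Y2 - (\<alpha> *s one + \<beta> *s X)) one = 0" "P (Y2 - (\<alpha> *s one + \<beta> *s X)) X = 0"
    using proj2[OF d, of Y1 Y2] tt pp by (auto simp: t_def P_sym[of _ X])
  define p where "p = \<alpha> *s one + \<beta> *s X"
  define v where "v = Y1 - p"
  define v' where "v' = Y2 - p"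
  have v1: "P v one = 0" "P v X = 0" "P v' one = 0" "P v' X = 0" using pr by (simp_all add: p_def v_def v'_def)
  have "P p v = \<alpha> * P v one + \<beta> * P v X" "P p v' = \<alpha> * P v' one + \<beta> * P v' X"
    by (simp_all add: p_def Pbil P_sym[of one v] P_sym[of X v] P_sym[of one v'] P_sym[of X v'])
  then have pv: "P p v = 0" "P p v' = 0" using v1 by simp_all
  have "n Y1 = n p + n v" using pv by (simp add: v_def n_add[of p "Y1 - p", simplified] )
  moreover have "n Y2 = n p + n v'" using pv by (simp add: v'_def n_add[of p "Y2 - p", simplified])
  ultimately have nv: "n v' = n v" using nn by simp
  show ?thesis
  proof (cases "v = 0")
    case True
    then have "v' = 0" using nv by (simp add: n_eq0_iff)
    then have "Y1 = Y2" using True by (simp add: v_def v'_def)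
    then show ?thesis using aut_id by auto
  next
    case False
    obtain w where w: "w \<noteq> 0" "\<forall>s\<in>set [one, X, v, X \<odot> v, v', X \<odot> v']. P w s = 0"
      using LA2[OF _ card6] by blast
    obtain \<phi> where \<phi>: "aut \<phi>" "\<phi> X = X" "\<phi> v = v'" "\<phi> w = w"
      using chain[of X X v v' w w] d False nv w pr by (auto simp: p_def v_def v'_def)
    have "\<phi> Y1 = \<phi> p + \<phi> v" using \<phi>(1) by (simp add: v_def aut_lin(1)[symmetric])
    also have "\<phi> p = p" unfolding p_def by (rule aut_fix_K[OF \<phi>(1,2)])
    finally have "\<phi> Y1 = Y2" using \<phi>(3) by (simp add: v'_def)
    then show ?thesis using \<phi> by blast
  qed
qed

end


context cay
begin

lemma orthB:
  assumes tX: "t X = 0" and uX: "P u X = 0" and nX: "n X \<noteq> 0" and YX: "P Y X = 0"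
    and h1: "P (Y - p1) one = 0" and h2: "P (Y - p1) u = 0"
    and h3: "P (Y \<odot> cj X - b0) one = 0" and h4: "P (Y \<odot> cj X - b0) u = 0"
    and p1: "p1 = a1 *s one + c1 *s u" and b0: "b0 = a2 *s one + c2 *s u"
    and w: "w = Y - (p1 + ((1 / n X) *s b0) \<odot> X)"
  shows "P w one = 0 \<and> P w u = 0 \<and> P w X = 0 \<and> P w (u \<odot> X) = 0"
proof -
  define b where "b = (1 / n X) *s b0"
  have bb: "b = (a2 / n X) *s one + (c2 / n X) *s u" by (simp add: b_def b0 algebra_simps)
  have X1: "P X one = 0" using tX by (simp add: t_def)
  have Xu: "P X u = 0" using uX by (simp add: P_sym)
  have uX1: "P (u \<odot> X) one = 0" using tX uX by (simp add: t_def[symmetric] t_mult)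
  have uXu: "P (u \<odot> X) u = 0" using I1[of u X one] X1 by simp
  have uXX: "P (u \<odot> X) X = t u * n X" using I1'[of u X one] by (simp add: t_def)
  have XX: "P X X = 2 * n X" by (rule P_self)
  have YcX1: "P (Y \<odot> cj X) one = 0" using I4b[of Y "cj X" one] YX by simp
  have bX1: "P (b \<odot> X) one = 0" by (simp add: bb bil Pbil X1 uX1)
  have bXu: "P (b \<odot> X) u = 0" by (simp add: bb bil Pbil Xu uXu)
  have bXX: "P (b \<odot> X) X = P b one * n X" using I1'[of b X one] by simp
  have bo: "P b one = 0"
  proof -
    have "P b0 one = 0" using h3 YcX1 by (simp add: Pl_diff)
    then show ?thesis by (simp add: b_def Pl_scale)
  qed
  have bXuX: "P (b \<odot> X) (u \<odot> X) = P b0 u"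
    using I1'[of b X u] nX by (simp add: b_def Pl_scale)
  have YuX: "P Y (u \<odot> X) = P b0 u"
  proof -
    have "P Y (u \<odot> X) = P (u \<odot> X) Y" by (rule P_sym)
    also have "\<dots> = P u (Y \<odot> cj X)" by (simp add: I4b)
    also have "\<dots> = P (Y \<odot> cj X) u" by (rule P_sym)
    also have "\<dots> = P b0 u" using h4 by (simp add: Pl_diff)
    finally show ?thesis .
  qed
  have p1uX: "P p1 (u \<odot> X) = 0"
  proof -
    have "P one (u \<odot> X) = 0" using uX1 by (simp add: P_sym)
    moreover have "P u (u \<odot> X) = 0" using uXu by (simp add: P_sym)
    ultimately show ?thesis by (simp add: p1 Pbil)
  qed
  have p1X: "P p1 X = 0" by (simp add: p1 Pbil P_sym[of one X] P_sym[of u X] X1 Xu)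
  have w': "w = Y - p1 - b \<odot> X" by (simp add: w b_def)
  show ?thesis
  proof (intro conjI)
    show "P w one = 0" using h1 bX1 by (simp add: w' Pl_diff)
    show "P w u = 0" using h2 bXu by (simp add: w' Pl_diff)
    show "P w X = 0" using YX p1X bXX bo by (simp add: w' Pl_diff)
    show "P w (u \<odot> X) = 0" using YuX p1uX bXuX by (simp add: w' Pl_diff)
  qed
qed

end


context cay
begin

lemma coreB:
  assumes two: "(2::'f) = 0" and nF: "\<And>c. X \<noteq> c *s one" and tX: "t X = 0"
    and t1: "t Y1 = 0" and t2: "t Y2 = 0" and pp: "P X Y1 = P X Y2" and nn: "n Y1 = n Y2"
  shows "\<exists>\<phi>. aut \<phi> \<and> \<phi> X = X \<and> \<phi> Y1 = Y2"
proof -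
  have four: "(4::'f) = 0"
  proof -
    have "(4::'f) = 2 * 2" by simp
    then show ?thesis using two by simp
  qed
  have X0: "X \<noteq> 0" using nF[of 0] by simp
  have nX: "n X \<noteq> 0" using X0 by (simp add: n_eq0_iff)
  have cjX: "cj X = - X" by (rule cj_w[OF tX])
  have X1: "P X one = 0" using tX by (simp add: t_def)
  show ?thesis
  proof (cases "P X Y1 = 0")
    case False
    define c where "c = P X Y1"
    define e where "e = X \<odot> Y1"
    define e' where "e' = X \<odot> Y2"
    have te: "t e = - c" "t e' = - c" using tX t1 t2 pp by (simp_all add: e_def e'_def c_def t_mult)
    have de: "det e \<noteq> 0" using False four by (simp add: det_def te c_def)
    have ne: "n e' = n e" using nn by (simp add: e_def e'_def n_mult)
    have Xe: "P X e = 0" "P X e' = 0"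
      using I1[of X one Y1] I1[of X one Y2] t1 t2 by (simp_all add: e_def e'_def P_one_e)
    obtain w where w: "w \<noteq> 0" "\<forall>s\<in>set [one, e, X, e \<odot> X, e', e' \<odot> X]. P w s = 0"
      using LA2[OF _ card6] by blast
    obtain \<phi> where \<phi>: "aut \<phi>" "\<phi> e = e'" "\<phi> X = X" "\<phi> w = w"
      using chain[of e e' X X w w] de te ne X1 Xe X0 w by auto
    have y1: "n X *s Y1 = - (X \<odot> e)" using I5[of X Y1] cjX by (simp add: e_def ml_neg)
    have y2: "n X *s Y2 = - (X \<odot> e')" using I5[of X Y2] cjX by (simp add: e'_def ml_neg)
    have "n X *s \<phi> Y1 = \<phi> (n X *s Y1)" using \<phi>(1) by (simp add: aut_lin)
    also have "\<dots> = - (\<phi> X \<odot> \<phi> e)" using \<phi>(1) y1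
      by (metis aut_mult aut_lin(2) scale_minus_left scale_one)
    also have "\<dots> = n X *s Y2" using \<phi> y2 by simp
    finally have "\<phi> Y1 = Y2" using nX by simp
    then show ?thesis using \<phi> by blast
  next
    case True
    note c0 = True
    define d where "d = Y1 - Y2"
    show ?thesis
    proof (cases "d = 0")
      case True
      then show ?thesis using aut_id by (auto simp: d_def)
    next
      case dne: False
      show ?thesis
      proof (cases "one \<in> span {X, d, d \<odot> cj X}")
        case True
        then obtain a b g where abg: "one - a *s X - b *s d - g *s (d \<odot> cj X) = 0"
          by (auto simp: span_breakdown_eq span_empty)
        define k where "k = b *s one - g *s X"
        have dk: "d \<odot> k = one - a *s X" using abg cjX by (simp add: k_def bil algebra_simps)
        show ?thesis
        proof (cases "k = 0")
          case True
          then have bg: "b *s one = g *s X" by (simp add: k_def)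
          have "g = 0"
          proof (rule ccontr)
            assume "g \<noteq> 0"
            then have "X = (1 / g) *s (g *s X)" by simp
            also have "\<dots> = (1 / g) *s (b *s one)" by (simp only: bg)
            also have "\<dots> = (b / g) *s one" by simp
            finally have "X = (b / g) *s one" .
            then show False using nF by blast
          qed
          then have "b = 0" using bg one_nz by simp
          have "one = a *s X" using dk True by (simp add: mr_zero)
          then have "a \<noteq> 0" using one_nz by auto
          then have "X = (1 / a) *s one" using \<open>one = a *s X\<close> by simp
          then show ?thesis using nF by blast
        next
          case False
          then have nk: "n k \<noteq> 0" by (simp add: n_eq0_iff)
          have ck: "cj k = (t k - b) *s one + g *s X" by (simp add: cj_def k_def algebra_simps)
          have "n k *s d = (d \<odot> k) \<odot> cj k" by (simp add: I5')
          also have "\<dots> = (t k - b + a * g * n X) *s one + (g - a * (t k - b)) *s X"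
            unfolding dk ck by (simp add: bil quad tX algebra_simps)
          finally have E: "n k *s d = (t k - b + a * g * n X) *s one + (g - a * (t k - b)) *s X" .
          have "d = (1 / n k) *s (n k *s d)" using nk by simp
          also have "\<dots> = (1 / n k) *s ((t k - b + a * g * n X) *s one + (g - a * (t k - b)) *s X)" by (simp only: E)
          also have "\<dots> = ((t k - b + a * g * n X) / n k) *s one + ((g - a * (t k - b)) / n k) *s X"
            by (simp add: scale_right_distrib)
          finally have dd: "d = ((t k - b + a * g * n X) / n k) *s one + ((g - a * (t k - b)) / n k) *s X" .
          have "P Y1 d = 0" using t1 c0 by (simp add: dd Pbil t_def P_sym[of X])
          moreover have "n Y2 = n Y1 + n d - P Y1 d" by (simp add: d_def n_diff[of Y1 "Y1 - Y2", symmetric])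
          ultimately have "n d = 0" using nn by simp
          then show ?thesis using dne by (simp add: n_eq0_iff)
        qed
      next
        case False
        obtain u where u: "P u one = 1" "\<forall>s\<in>{X, d, d \<odot> cj X}. P u s = 0"
          using LA1[OF False] by blast
        have tu: "t u = 1" using u by (simp add: t_def)
        have du: "det u \<noteq> 0" using four tu by (simp add: det_def)
        have uX: "P u X = 0" using u by simp
        obtain a1 c1 where pr1: "P (Y1 - (a1 *s one + c1 *s u)) one = 0" "P (Y1 - (a1 *s one + c1 *s u)) u = 0"
            "P (Y2 - (a1 *s one + c1 *s u)) one = 0" "P (Y2 - (a1 *s one + c1 *s u)) u = 0"
        proof -
          have "P Y1 one = P Y2 one" using t1 t2 by (simp add: t_def)
          moreover have "P Y1 u = P Y2 u" using u(2) by (simp add: d_def Pr_diff P_sym[of Y1 u] P_sym[of Y2 u])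
          ultimately show ?thesis using proj2[OF du, of Y1 Y2] that by blast
        qed
        obtain a2 c2 where pr2: "P (Y1 \<odot> cj X - (a2 *s one + c2 *s u)) one = 0" "P (Y1 \<odot> cj X - (a2 *s one + c2 *s u)) u = 0"
            "P (Y2 \<odot> cj X - (a2 *s one + c2 *s u)) one = 0" "P (Y2 \<odot> cj X - (a2 *s one + c2 *s u)) u = 0"
        proof -
          have "P (Y1 \<odot> cj X) one = P Y1 X" using I4b[of Y1 "cj X" one] by simp
          moreover have "P (Y2 \<odot> cj X) one = P Y2 X" using I4b[of Y2 "cj X" one] by simp
          moreover have "P Y1 X = P Y2 X" using pp by (simp add: P_sym)
          moreover have "P (Y1 \<odot> cj X) u = P (Y2 \<odot> cj X) u"
          proof -
            have "P (d \<odot> cj X) u = 0" using u by (simp add: P_sym)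
            then show ?thesis by (simp add: d_def ml_diff Pl_diff)
          qed
          ultimately show ?thesis using proj2[OF du, of "Y1 \<odot> cj X" "Y2 \<odot> cj X"] that by auto
        qed
        define p1 where "p1 = a1 *s one + c1 *s u"
        define b0 where "b0 = a2 *s one + c2 *s u"
        define p where "p = p1 + ((1 / n X) *s b0) \<odot> X"
        define w where "w = Y1 - p"
        define w' where "w' = Y2 - p"
        have Y1X: "P Y1 X = 0" using True by (simp add: P_sym)
        have Y2X: "P Y2 X = 0" using True pp by (simp add: P_sym)
        have ow: "P w one = 0 \<and> P w u = 0 \<and> P w X = 0 \<and> P w (u \<odot> X) = 0"
          by (rule orthB[OF tX uX nX Y1X _ _ _ _ p1_def b0_def]) (use pr1 pr2 in \<open>simp_all add: p1_def b0_def w_def p_def\<close>)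
        have ow': "P w' one = 0 \<and> P w' u = 0 \<and> P w' X = 0 \<and> P w' (u \<odot> X) = 0"
          by (rule orthB[OF tX uX nX Y2X _ _ _ _ p1_def b0_def]) (use pr1 pr2 in \<open>simp_all add: p1_def b0_def w'_def p_def\<close>)
        have pexp: "p = a1 *s one + c1 *s u + (a2 / n X) *s X + (c2 / n X) *s (u \<odot> X)"
          by (simp add: p_def p1_def b0_def bil algebra_simps)
        have Pp: "\<And>z. P z one = 0 \<Longrightarrow> P z u = 0 \<Longrightarrow> P z X = 0 \<Longrightarrow> P z (u \<odot> X) = 0 \<Longrightarrow> P p z = 0"
          by (simp add: pexp Pbil P_sym[of one] P_sym[of u] P_sym[of X] P_sym[of "u \<odot> X"])
        have "n Y1 = n p + n w" using Pp[of w] ow by (simp add: w_def n_add[of p "Y1 - p", simplified])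
        moreover have "n Y2 = n p + n w'" using Pp[of w'] ow' by (simp add: w'_def n_add[of p "Y2 - p", simplified])
        ultimately have nw: "n w' = n w" using nn by simp
        show ?thesis
        proof (cases "w = 0")
          case True
          then have "w' = 0" using nw by (simp add: n_eq0_iff)
          then have "Y1 = Y2" using True by (simp add: w_def w'_def)
          then show ?thesis using aut_id by auto
        next
          case False
          have uX': "P X u = 0" using uX by (simp add: P_sym)
          obtain \<phi> where \<phi>: "aut \<phi>" "\<phi> u = u" "\<phi> X = X" "\<phi> w = w'"
            using chain[of u u X X w w'] du X1 uX' X0 ow ow' False nw by auto
          have "\<phi> p = p" using \<phi> by (simp add: pexp aut_lin aut_one aut_mult)
          have "\<phi> Y1 = \<phi> p + \<phi> w" using \<phi>(1) by (simp add: w_def aut_lin(1)[symmetric])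
          then have "\<phi> Y1 = Y2" using \<open>\<phi> p = p\<close> \<phi>(4) by (simp add: w'_def)
          then show ?thesis using \<phi> by blast
        qed
      qed
    qed
  qed
qed

end


context cay
begin

lemma two_char:
  assumes d: "det x = 0" and nF: "\<And>c. x \<noteq> c *s one"
  shows "(2::'f) = 0 \<and> t x = 0"
proof (cases "(2::'f) = 0")
  case True
  have "(4::'f) = 2 * 2" by simp
  then have "(4::'f) = 0" using True by simp
  then have "t x * t x = 0" using d by (simp add: det_def)
  then show ?thesis using True by simp
next
  case False
  define h where "h = t x / 2"
  define z where "z = x - h *s one"
  have hh: "h + h = t x" using False by (simp add: h_def field_simps)
  have "z \<odot> z = x \<odot> x - h *s x - h *s x + (h * h) *s one" by (simp add: z_def bil algebra_simps)
  also have "\<dots> = x \<odot> x - (h + h) *s x + (h * h) *s one" unfolding scale_left_distrib by (simp add: algebra_simps)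
  also have "\<dots> = (h * h - n x) *s one" by (simp add: quad hh algebra_simps)
  finally have zz: "z \<odot> z = (h * h - n x) *s one" .
  have f4: "(4::'f) \<noteq> 0"
  proof -
    have "(2::'f) * 2 \<noteq> 0" by (metis False mult_eq_0_iff)
    then show ?thesis by simp
  qed
  have "4 * (n x - h * h) = det x" by (simp add: det_def hh[symmetric] algebra_simps)
  then have "h * h - n x = 0" using d f4 by simp
  then have "z \<odot> z = 0" using zz by simp
  then have "z = 0" using no_zd by blast
  then have "x = h *s one" by (simp add: z_def)
  then show ?thesis using nF by blast
qed

lemma local_props:
  assumes "local_automorphism scale mult \<psi>"
  shows "\<And>a b. \<psi> (a + b) = \<psi> a + \<psi> b" "\<And>c a. \<psi> (c *s a) = c *s \<psi> a"
    "\<And>z. \<exists>\<phi>. aut \<phi> \<and> \<psi> z = \<phi> z"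
  using assms unfolding local_automorphism_def Vector_Spaces.linear_iff aut_def by auto

lemma local_n: assumes "local_automorphism scale mult \<psi>" shows "n (\<psi> z) = n z"
  using local_props(3)[OF assms, of z] aut_n by metis

lemma local_one: assumes "local_automorphism scale mult \<psi>" shows "\<psi> one = one"
  using local_props(3)[OF assms, of one] aut_one by metis

lemma local_P: assumes "local_automorphism scale mult \<psi>" shows "P (\<psi> a) (\<psi> b) = P a b"
  by (simp add: P_def norm_polar_def local_n[OF assms] flip: local_props(1)[OF assms])

lemma local_t: assumes "local_automorphism scale mult \<psi>" shows "t (\<psi> a) = t a"
  using local_P[OF assms, of a one] local_one[OF assms] by (simp add: t_def)

lemma local_det: assumes "local_automorphism scale mult \<psi>" shows "det (\<psi> a) = det a"
  by (simp add: det_def local_n[OF assms] local_t[OF assms])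

lemma PP_aux:
  assumes L: "local_automorphism scale mult \<psi>" and a: "aut \<theta>" and e: "\<psi> x = \<theta> x"
  shows "P (\<psi> x) (\<theta> y) = P (\<psi> x) (\<psi> y)"
proof -
  have "P (\<psi> x) (\<theta> y) = P (\<theta> x) (\<theta> y)" using e by simp
  also have "\<dots> = P x y" by (rule aut_P[OF a])
  also have "\<dots> = P (\<psi> x) (\<psi> y)" by (rule local_P[OF L, symmetric])
  finally show ?thesis .
qed

lemma local_2local:
  assumes L: "local_automorphism scale mult \<psi>"
  shows "\<exists>\<phi>. aut \<phi> \<and> \<psi> x = \<phi> x \<and> \<psi> y = \<phi> y"
proof -
  have sc: "\<And>c. \<psi> (c *s one) = c *s one" using local_props(2)[OF L] local_one[OF L] by simp
  have afix: "\<And>\<phi> c. aut \<phi> \<Longrightarrow> \<phi> (c *s one) = c *s one" by (simp add: aut_lin aut_one)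
  obtain \<theta>x where \<theta>x: "aut \<theta>x" "\<psi> x = \<theta>x x" using local_props(3)[OF L] by blast
  obtain \<theta>y where \<theta>y: "aut \<theta>y" "\<psi> y = \<theta>y y" using local_props(3)[OF L] by blast
  show ?thesis
  proof (cases "\<exists>c. x = c *s one")
    case True
    then obtain c where "x = c *s one" by blast
    then show ?thesis using \<theta>y by (intro exI[of _ \<theta>y]) (simp add: sc afix)
  next
    case nx: False
    show ?thesis
    proof (cases "\<exists>c. y = c *s one")
      case True
      then obtain c where "y = c *s one" by blast
      then show ?thesis using \<theta>x by (intro exI[of _ \<theta>x]) (simp add: sc afix)
    next
      case ny: False
      show ?thesis
      proof (cases "det x = 0")
        case False
        have "\<exists>\<chi>. aut \<chi> \<and> \<chi> (\<psi> x) = \<psi> x \<and> \<chi> (\<theta>x y) = \<psi> y"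
        proof (rule coreA)
          show "det (\<psi> x) \<noteq> 0" using False by (simp add: local_det[OF L])
          show "t (\<theta>x y) = t (\<psi> y)" by (simp add: aut_t[OF \<theta>x(1)] local_t[OF L])
          show "P (\<psi> x) (\<theta>x y) = P (\<psi> x) (\<psi> y)" by (rule PP_aux[OF L \<theta>x])
          show "n (\<theta>x y) = n (\<psi> y)" by (simp add: aut_n[OF \<theta>x(1)] local_n[OF L])
        qed
        then obtain \<chi> where \<chi>: "aut \<chi>" "\<chi> (\<psi> x) = \<psi> x" "\<chi> (\<theta>x y) = \<psi> y" by blast
        show ?thesis using \<chi> \<theta>x by (intro exI[of _ "\<chi> \<circ> \<theta>x"]) (auto simp: aut_comp)
      next
        case dx: True
        show ?thesis
        proof (cases "det y = 0")
          case False
          have "\<exists>\<chi>. aut \<chi> \<and> \<chi> (\<psi> y) = \<psi> y \<and> \<chi> (\<theta>y x) = \<psi> x"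
          proof (rule coreA)
            show "det (\<psi> y) \<noteq> 0" using False by (simp add: local_det[OF L])
            show "t (\<theta>y x) = t (\<psi> x)" by (simp add: aut_t[OF \<theta>y(1)] local_t[OF L])
            show "P (\<psi> y) (\<theta>y x) = P (\<psi> y) (\<psi> x)" by (rule PP_aux[OF L \<theta>y])
            show "n (\<theta>y x) = n (\<psi> x)" by (simp add: aut_n[OF \<theta>y(1)] local_n[OF L])
          qed
          then obtain \<chi> where \<chi>: "aut \<chi>" "\<chi> (\<psi> y) = \<psi> y" "\<chi> (\<theta>y x) = \<psi> x" by blast
          show ?thesis using \<chi> \<theta>y by (intro exI[of _ "\<chi> \<circ> \<theta>y"]) (auto simp: aut_comp)
        next
          case dy: True
          have cx: "(2::'f) = 0 \<and> t x = 0" using two_char[OF dx] nx by blast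
          have cy: "t y = 0" using two_char[OF dy] ny by blast
          have "\<exists>\<chi>. aut \<chi> \<and> \<chi> (\<psi> x) = \<psi> x \<and> \<chi> (\<theta>x y) = \<psi> y"
          proof (rule coreB)
            show "(2::'f) = 0" using cx by simp
            show "\<And>c. \<psi> x \<noteq> c *s one"
            proof
              fix c assume "\<psi> x = c *s one"
              moreover have "\<theta>x (c *s one) = c *s one" using afix[OF \<theta>x(1)] .
              ultimately have "\<theta>x x = \<theta>x (c *s one)" using \<theta>x(2) by simp
              then have "x = c *s one" using bij_is_inj[OF aut_bij[OF \<theta>x(1)]] by (simp add: inj_eq)
              then show False using nx by blast
            qed
            show "t (\<psi> x) = 0" using cx by (simp add: local_t[OF L])
            show "t (\<theta>x y) = 0" using cy by (simp add: aut_t[OF \<theta>x(1)])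
            show "t (\<psi> y) = 0" using cy by (simp add: local_t[OF L])
            show "P (\<psi> x) (\<theta>x y) = P (\<psi> x) (\<psi> y)" by (rule PP_aux[OF L \<theta>x])
            show "n (\<theta>x y) = n (\<psi> y)" by (simp add: aut_n[OF \<theta>x(1)] local_n[OF L])
          qed
          then obtain \<chi> where \<chi>: "aut \<chi>" "\<chi> (\<psi> x) = \<psi> x" "\<chi> (\<theta>x y) = \<psi> y" by blast
          show ?thesis using \<chi> \<theta>x by (intro exI[of _ "\<chi> \<circ> \<theta>x"]) (auto simp: aut_comp)
        qed
      qed
    qed
  qed
qed

lemma n_diff3: "n (A - B - C) = n A + n B + n C - P A B - P A C + P B C"
  by (simp add: n_diff n_add Pl_diff Pr_diff Pr_add algebra_simps)

lemma two_local_local: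
  assumes T: "two_local_automorphism scale mult \<Delta>"
  shows "local_automorphism scale mult \<Delta>"
proof -
  have pair: "\<And>a b. \<exists>\<phi>. aut \<phi> \<and> \<Delta> a = \<phi> a \<and> \<Delta> b = \<phi> b"
    using T unfolding two_local_automorphism_def aut_def by blast
  have nD: "\<And>a. n (\<Delta> a) = n a" using pair aut_n by metis
  have PD: "\<And>a b. P (\<Delta> a) (\<Delta> b) = P a b" using pair aut_P by metis
  have add: "\<And>a b. \<Delta> (a + b) = \<Delta> a + \<Delta> b"
  proof -
    fix a b
    have "n (\<Delta> (a + b) - \<Delta> a - \<Delta> b) = n ((a + b) - a - b)"
      by (simp only: n_diff3 nD PD)
    then have "n (\<Delta> (a + b) - \<Delta> a - \<Delta> b) = 0" by simp
    then show "\<Delta> (a + b) = \<Delta> a + \<Delta> b" by (simp add: n_eq0_iff algebra_simps)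
  qed
  have sc: "\<And>c a. \<Delta> (c *s a) = c *s \<Delta> a"
  proof -
    fix c a
    have "n (\<Delta> (c *s a) - c *s \<Delta> a) = n (\<Delta> (c *s a)) + c * c * n (\<Delta> a) - c * P (\<Delta> (c *s a)) (\<Delta> a)"
      by (simp add: n_diff n_scale Pr_scale)
    also have "\<dots> = n (c *s a) + c * c * n a - c * P (c *s a) a" by (simp add: nD PD)
    also have "\<dots> = n (c *s a - c *s a)" by (simp only: n_diff n_scale Pr_scale)
    finally have "n (\<Delta> (c *s a) - c *s \<Delta> a) = 0" by simp
    then show "\<Delta> (c *s a) = c *s \<Delta> a" by (simp add: n_eq0_iff)
  qed
  have lin: "Vector_Spaces.linear scale scale \<Delta>"
    unfolding Vector_Spaces.linear_iff using add sc vector_space_axioms by auto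
  show ?thesis unfolding local_automorphism_def
    using lin pair[of _ _] unfolding aut_def by blast
qed

end

theorem theorem4p5:
  fixes scale :: "'f::field \<Rightarrow> 'v::ab_group_add \<Rightarrow> 'v"
    and mult :: "'v \<Rightarrow> 'v \<Rightarrow> 'v" and one :: 'v and n :: "'v \<Rightarrow> 'f"
  assumes "division_cayley_algebra scale mult one n"
  shows "(\<forall>\<psi>. local_automorphism scale mult \<psi> \<longrightarrow> two_local_automorphism scale mult \<psi>)
     \<and> {\<psi>. local_automorphism scale mult \<psi>} = {\<Delta>. two_local_automorphism scale mult \<Delta>}"
proof -
  have vs: "vector_space scale" using assms by (simp add: division_cayley_algebra_def cayley_algebra_def)
  interpret c: cay scale mult one n
    by (rule cay.intro[OF vs]) (simp add: cay_axioms_def assms)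
  have 1: "\<And>\<psi>. local_automorphism scale mult \<psi> \<Longrightarrow> two_local_automorphism scale mult \<psi>"
    unfolding two_local_automorphism_def using c.local_2local unfolding c.aut_def by metis
  have 2: "\<And>\<Delta>. two_local_automorphism scale mult \<Delta> \<Longrightarrow> local_automorphism scale mult \<Delta>"
    by (rule c.two_local_local)
  show ?thesis using 1 2 by blast
qed


end
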